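(* Assume the setting and algorithm described in the context. If $0<\alpha\le\frac{\sqrt n}{\sqrt{8m}\,L}$, then for all $k\ge0$, almost surely, $$\mathbb E\big[t^{k+1}\,|\,\mathcal F^k\big]\le\Big(1-\frac1{4m}\Big)t^k+16m\alpha^2L\big(F(\bar x^k)-F^*\big)+\Big(8m\alpha^2L^2+\frac9{4m}\Big)\frac1n\|x^k-Jx^k\|^2 .$$
   Context: Setting. Let $n,m,p\ge1$ be integers and $\mathcal V=\{1,\dots,n\}$. For each $i\in\mathcal V$ and $j\in\{1,\dots,m\}$, $f_{i,j}:\mathbb R^p\to\mathbb R$ is differentiable and $L$-smooth for some $L>0$, i.e. $\|\nabla f_{i,j}(x)-\nabla f_{i,j}(y)\|\le L\|x-y\|$ for all $x,y\in\mathbb R^p$. Let $f_i:=\frac1m\sum_{j=1}^m f_{i,j}$ and $F:=\frac1n\sum_{i=1}^n f_i$, and assume $F^*:=\inf_{x\in\mathbb R^p}F(x)>-\infty$. Let $\underline W=(\underline w_{ir})\in\mathbb R^{n\times n}$ be a nonnegative, primitive, doubly stochastic matrix ($\underline W\mathbf 1_n=\mathbf 1_n$, $\mathbf 1_n^\top\underline W=\mathbf 1_n^\top$), and let $\lambda\in[0,1)$ be its second largest singular value. Any expression with $\lambda$ in a denominator is read as $+\infty$ when $\lambda=0$. Algorithm GT-SAGA with step-size $\alpha>0$: fix a deterministic $\bar x^0\in\mathbb R^p$; for all $i\in\mathcal V$ set $x_i^0=\bar x^0$, $z_{i,j}^0=x_i^0$ for all $j$, $y_i^0=0$, $g_i^{-1}=0$.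 For $k=0,1,2,\dots$ and every $i\in\mathcal V$: draw $\tau_i^k$ uniformly from $\{1,\dots,m\}$; set $g_i^k=\nabla f_{i,\tau_i^k}(x_i^k)-\nabla f_{i,\tau_i^k}(z_{i,\tau_i^k}^k)+\frac1m\sum_{j=1}^m\nabla f_{i,j}(z_{i,j}^k)$; set $y_i^{k+1}=\sum_{r=1}^n\underline w_{ir}(y_r^k+g_r^k-g_r^{k-1})$; set $x_i^{k+1}=\sum_{r=1}^n\underline w_{ir}(x_r^k-\alpha y_r^{k+1})$; draw $s_i^k$ uniformly from $\{1,\dots,m\}$; set $z_{i,j}^{k+1}=x_i^k$ if $j=s_i^k$ and $z_{i,j}^{k+1}=z_{i,j}^k$ otherwise. The family $\{\tau_i^k,s_i^k: i\in\mathcal V,k\ge0\}$ is independent. Notation. $x^k,y^k,g^k\in\mathbb R^{np}$ stack the $x_i^k$, $y_i^k$, $g_i^k$; $\nabla\mathbf f(x^k)\in\mathbb R^{np}$ stacks $\nabla f_i(x_i^k)$, $i=1,\dots,n$; $W=\underline W\otimes I_p$, $J=(\frac1n\mathbf 1_n\mathbf 1_n^\top)\otimes I_p$; $\bar x^k=\frac1n\sum_i x_i^k$, $\bar g^k=\frac1n\sum_i g_i^k$, $\overline{\nabla\mathbf f}(x^k)=\frac1n\sum_i\nabla f_i(x_i^k)$. $\mathcal F^0$ is the trivial $\sigma$-algebra and $\mathcal F^k=\sigma(\{\tau_i^t,s_i^t:i\in\mathcal V,\ t\le k-1\})$ for $k\ge1$. $t^k:=\frac1n\sum_{i=1}^n\frac1m\sum_{j=1}^m\|\bar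 x^k-z_{i,j}^k\|^2$. $\|\nabla\mathbf f(x^0)\|^2:=\sum_{i=1}^n\|\nabla f_i(\bar x^0)\|^2$. Norms are Euclidean (spectral for matrices); vector and matrix inequalities are entrywise. *)

theory Defs
  imports "HOL-Probability.Probability"
begin

text \<open>Nodes are indexed by 1..n, component functions by 1..m.
  A mixing matrix is a function W :: nat => nat => real restricted to 1..n.\<close>

primrec matpow :: "(nat \<Rightarrow> nat \<Rightarrow> real) \<Rightarrow> nat \<Rightarrow> nat \<Rightarrow> nat \<Rightarrow> nat \<Rightarrow> real" where
  "matpow W n 0 = (\<lambda>i j. if i = j then 1 else 0)"
| "matpow W n (Suc q) = (\<lambda>i j. \<Sum>l\<in>{1..n}. matpow W n q i l * W l j)"

definition doubly_stochastic :: "(nat \<Rightarrow> nat \<Rightarrow> real) \<Rightarrow> nat \<Rightarrow> bool" where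
  "doubly_stochastic W n \<longleftrightarrow>
     (\<forall>i\<in>{1..n}. \<forall>r\<in>{1..n}. W i r \<ge> 0) \<and>
     (\<forall>i\<in>{1..n}. (\<Sum>r\<in>{1..n}. W i r) = 1) \<and>
     (\<forall>r\<in>{1..n}. (\<Sum>i\<in>{1..n}. W i r) = 1)"

definition primitive :: "(nat \<Rightarrow> nat \<Rightarrow> real) \<Rightarrow> nat \<Rightarrow> bool" where
  "primitive W n \<longleftrightarrow> (\<exists>q\<ge>1. \<forall>i\<in>{1..n}. \<forall>r\<in>{1..n}. matpow W n q i r > 0)"

text \<open>GT-SAGA state after k iterations, as a deterministic function of the sampled
  indices tau k i (= tau_i^k) and s k i (= s_i^k).
  The state is (x^k, y^k, g^{k-1}, z^k); df i j is the gradient of f_{i,j}.\<close>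

primrec gt_saga ::
  "(nat \<Rightarrow> nat \<Rightarrow> real) \<Rightarrow> (nat \<Rightarrow> nat \<Rightarrow> 'v::real_normed_vector \<Rightarrow> 'v) \<Rightarrow> nat \<Rightarrow> nat \<Rightarrow> real \<Rightarrow> 'v
   \<Rightarrow> (nat \<Rightarrow> nat \<Rightarrow> nat) \<Rightarrow> (nat \<Rightarrow> nat \<Rightarrow> nat) \<Rightarrow> nat
   \<Rightarrow> (nat \<Rightarrow> 'v) \<times> (nat \<Rightarrow> 'v) \<times> (nat \<Rightarrow> 'v) \<times> (nat \<Rightarrow> nat \<Rightarrow> 'v)" where
  "gt_saga W df n m \<alpha> x0 tau s 0 = ((\<lambda>i. x0), (\<lambda>i. 0), (\<lambda>i. 0), (\<lambda>i j. x0))"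
| "gt_saga W df n m \<alpha> x0 tau s (Suc k) =
     (case gt_saga W df n m \<alpha> x0 tau s k of (x, y, gp, z) \<Rightarrow>
       let g = (\<lambda>i. df i (tau k i) (x i) - df i (tau k i) (z i (tau k i))
                    + (1 / real m) *\<^sub>R (\<Sum>j\<in>{1..m}. df i j (z i j)));
           y' = (\<lambda>i. \<Sum>r\<in>{1..n}. W i r *\<^sub>R (y r + g r - gp r));
           x' = (\<lambda>i. \<Sum>r\<in>{1..n}. W i r *\<^sub>R (x r - \<alpha> *\<^sub>R y' r));
           z' = (\<lambda>i j. if j = s k i then x i else z i j)
       in (x', y', g, z'))"

definition gt_x where "gt_x W df n m \<alpha> x0 tau s k = fst (gt_saga W df n m \<alpha> x0 tau s k)"
definition gt_z where "gt_z W df n m \<alpha> x0 tau s k = snd (snd (snd (gt_saga W df n m \<alpha> x0 tau s k)))"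

definition avg :: "nat \<Rightarrow> (nat \<Rightarrow> 'v::real_vector) \<Rightarrow> 'v" where
  "avg n x = (1 / real n) *\<^sub>R (\<Sum>i\<in>{1..n}. x i)"

definition tval :: "nat \<Rightarrow> nat \<Rightarrow> (nat \<Rightarrow> 'v::real_normed_vector) \<Rightarrow> (nat \<Rightarrow> nat \<Rightarrow> 'v) \<Rightarrow> real" where
  "tval n m x z = (1 / real n) * (\<Sum>i\<in>{1..n}. (1 / real m) * (\<Sum>j\<in>{1..m}. (norm (avg n x - z i j))\<^sup>2))"

text \<open>||x - J x||^2 = sum_i ||x_i - xbar||^2\<close>
definition cons_err :: "nat \<Rightarrow> (nat \<Rightarrow> 'v::real_normed_vector) \<Rightarrow> real" where
  "cons_err n x = (\<Sum>i\<in>{1..n}. (norm (x i - avg n x))\<^sup>2)"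

definition filt :: "'a measure \<Rightarrow> (nat \<Rightarrow> nat \<Rightarrow> 'a \<Rightarrow> nat) \<Rightarrow> (nat \<Rightarrow> nat \<Rightarrow> 'a \<Rightarrow> nat) \<Rightarrow> nat \<Rightarrow> nat \<Rightarrow> 'a measure" where
  "filt M tau s n k = sigma (space M)
     (\<Union>t\<in>{..<k}. \<Union>i\<in>{1..n}. {tau t i -` A \<inter> space M | A. True} \<union> {s t i -` A \<inter> space M | A. True})"

end

theory Submission
  imports Defs
begin

lemma sum_PiE_split:
  assumes "i \<in> I" "finite I"
  shows "(\<Sum>a\<in>PiE I (\<lambda>_. S). \<Phi> a) = (\<Sum>c\<in>S. \<Sum>g\<in>PiE (I-{i}) (\<lambda>_. S). \<Phi> (g(i:=c)))"
proof -
  have I: "I = insert i (I-{i})" using assms by auto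
  have "PiE I (\<lambda>_. S) = (\<lambda>(y, g). g(i := y)) ` (S \<times> PiE (I-{i}) (\<lambda>_. S))"
    by (subst I, subst PiE_insert_eq) simp
  moreover have "inj_on (\<lambda>(y, g). g(i := y)) (S \<times> PiE (I-{i}) (\<lambda>_. S))"
    using inj_combinator[of i "I-{i}" "\<lambda>_. S"] by simp
  ultimately have "(\<Sum>a\<in>PiE I (\<lambda>_. S). \<Phi> a) = (\<Sum>p\<in>S \<times> PiE (I-{i}) (\<lambda>_. S). \<Phi> ((\<lambda>(y, g). g(i := y)) p))"
    by (simp add: sum.reindex)
  also have "\<dots> = (\<Sum>c\<in>S. \<Sum>g\<in>PiE (I-{i}) (\<lambda>_. S). \<Phi> (g(i:=c)))"
    by (simp add: sum.cartesian_product split_def)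
  finally show ?thesis .
qed

lemma card_PiE_const: "finite I \<Longrightarrow> card (PiE I (\<lambda>_. S)) = card S ^ card I"
  by (simp add: card_PiE)

lemma sum_PiE_coord:
  fixes \<phi> :: "'b \<Rightarrow> 'c::real_vector"
  assumes "i \<in> I" "finite I"
  shows "(\<Sum>a\<in>PiE I (\<lambda>_. S). \<phi> (a i)) = real (card S ^ (card I - 1)) *\<^sub>R (\<Sum>c\<in>S. \<phi> c)"
proof -
  have "(\<Sum>a\<in>PiE I (\<lambda>_. S). \<phi> (a i)) = (\<Sum>c\<in>S. \<Sum>g\<in>PiE (I-{i}) (\<lambda>_. S). \<phi> c)"
    by (subst sum_PiE_split[OF assms]) simp
  also have "\<dots> = (\<Sum>c\<in>S. real (card (PiE (I-{i}) (\<lambda>_. S))) *\<^sub>R \<phi> c)"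
    by (simp add: sum_constant_scaleR)
  also have "card (PiE (I-{i}) (\<lambda>_. S)) = card S ^ (card I - 1)"
    using assms by (simp add: card_PiE_const)
  finally show ?thesis by (simp add: scaleR_sum_right)
qed

lemma sum_PiE_cross:
  fixes u v :: "nat \<Rightarrow> 'v::real_inner"
  assumes "i \<in> I" "l \<in> I" "i \<noteq> l" "finite I" "(\<Sum>c\<in>S. u c) = 0"
  shows "(\<Sum>a\<in>PiE I (\<lambda>_. S). inner (u (a i)) (v (a l))) = 0"
proof -
  have "(\<Sum>a\<in>PiE I (\<lambda>_. S). inner (u (a i)) (v (a l)))
     = (\<Sum>c\<in>S. \<Sum>g\<in>PiE (I-{i}) (\<lambda>_. S). inner (u c) (v (g l)))"
    by (subst sum_PiE_split[OF assms(1,4)]) (use assms in simp)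
  also have "\<dots> = (\<Sum>g\<in>PiE (I-{i}) (\<lambda>_. S). \<Sum>c\<in>S. inner (u c) (v (g l)))"
    by (rule sum.swap)
  also have "\<dots> = (\<Sum>g\<in>PiE (I-{i}) (\<lambda>_. S). inner (\<Sum>c\<in>S. u c) (v (g l)))"
    by (simp add: inner_sum_left)
  also have "\<dots> = 0" using assms by simp
  finally show ?thesis .
qed

lemma sum_PiE_var:
  fixes e :: "nat \<Rightarrow> nat \<Rightarrow> 'v::real_inner"
  assumes "finite I" "\<And>i. i \<in> I \<Longrightarrow> (\<Sum>c\<in>S. e i c) = 0"
  shows "(\<Sum>a\<in>PiE I (\<lambda>_. S). (norm (\<Sum>i\<in>I. e i (a i)))\<^sup>2)
       = real (card S ^ (card I - 1)) * (\<Sum>i\<in>I. \<Sum>c\<in>S. (norm (e i c))\<^sup>2)"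
proof -
  have "(\<Sum>a\<in>PiE I (\<lambda>_. S). (norm (\<Sum>i\<in>I. e i (a i)))\<^sup>2)
     = (\<Sum>a\<in>PiE I (\<lambda>_. S). \<Sum>i\<in>I. \<Sum>l\<in>I. inner (e i (a i)) (e l (a l)))"
    by (simp add: power2_norm_eq_inner inner_sum_left) (simp add: inner_sum_right)
  also have "\<dots> = (\<Sum>i\<in>I. \<Sum>l\<in>I. \<Sum>a\<in>PiE I (\<lambda>_. S). inner (e i (a i)) (e l (a l)))"
    by (simp add: sum.swap[of _ "PiE I (\<lambda>_. S)"] )
  also have "\<dots> = (\<Sum>i\<in>I. \<Sum>a\<in>PiE I (\<lambda>_. S). inner (e i (a i)) (e i (a i)))"
  proof (rule sum.cong[OF refl])
    fix i assume i: "i \<in> I"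
    have "(\<Sum>l\<in>I. \<Sum>a\<in>PiE I (\<lambda>_. S). inner (e i (a i)) (e l (a l)))
       = (\<Sum>a\<in>PiE I (\<lambda>_. S). inner (e i (a i)) (e i (a i))) +
         (\<Sum>l\<in>I-{i}. \<Sum>a\<in>PiE I (\<lambda>_. S). inner (e i (a i)) (e l (a l)))"
      using i assms(1) by (simp add: sum.remove)
    also have "(\<Sum>l\<in>I-{i}. \<Sum>a\<in>PiE I (\<lambda>_. S). inner (e i (a i)) (e l (a l))) = 0"
      by (rule sum.neutral) (use i assms in \<open>auto intro!: sum_PiE_cross\<close>)
    finally show "(\<Sum>l\<in>I. \<Sum>a\<in>PiE I (\<lambda>_. S). inner (e i (a i)) (e l (a l)))
       = (\<Sum>a\<in>PiE I (\<lambda>_. S). inner (e i (a i)) (e i (a i)))" by simp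
  qed
  also have "\<dots> = (\<Sum>i\<in>I. real (card S ^ (card I - 1)) * (\<Sum>c\<in>S. (norm (e i c))\<^sup>2))"
  proof (rule sum.cong[OF refl])
    fix i assume i: "i \<in> I"
    show "(\<Sum>a\<in>PiE I (\<lambda>_. S). inner (e i (a i)) (e i (a i))) = real (card S ^ (card I - 1)) * (\<Sum>c\<in>S. (norm (e i c))\<^sup>2)"
      using sum_PiE_coord[OF i assms(1), of "\<lambda>c. inner (e i c) (e i c)" S]
      by (simp add: power2_norm_eq_inner)
  qed
  finally show ?thesis by (simp add: sum_distrib_left)
qed

definition gradF :: "nat \<Rightarrow> nat \<Rightarrow> (nat \<Rightarrow> nat \<Rightarrow> 'v \<Rightarrow> 'v) \<Rightarrow> 'v \<Rightarrow> 'v::real_vector" where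
  "gradF n m df x = (1 / real n) *\<^sub>R (\<Sum>i\<in>{1..n}. (1 / real m) *\<^sub>R (\<Sum>j\<in>{1..m}. df i j x))"

lemma gradF_lip:
  fixes df :: "nat \<Rightarrow> nat \<Rightarrow> 'v \<Rightarrow> 'v::real_normed_vector"
  assumes n: "n \<ge> 1" and m: "m \<ge> 1"
    and smooth: "\<And>i j x y. i \<in> {1..n} \<Longrightarrow> j \<in> {1..m} \<Longrightarrow> norm (df i j x - df i j y) \<le> L * norm (x - y)"
  shows "norm (gradF n m df u - gradF n m df w) \<le> L * norm (u - w)"
proof -
  have "gradF n m df u - gradF n m df w = (1 / real n) *\<^sub>R (\<Sum>i\<in>{1..n}. (1 / real m) *\<^sub>R (\<Sum>j\<in>{1..m}. df i j u - df i j w))"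
    by (simp add: gradF_def scaleR_diff_right[symmetric] sum_subtractf[symmetric])
  also have "norm \<dots> \<le> (1 / real n) * (\<Sum>i\<in>{1..n}. (1 / real m) * (\<Sum>j\<in>{1..m}. norm (df i j u - df i j w)))"
  proof -
    have "norm (\<Sum>i\<in>{1..n}. (1 / real m) *\<^sub>R (\<Sum>j\<in>{1..m}. df i j u - df i j w))
        \<le> (\<Sum>i\<in>{1..n}. norm ((1 / real m) *\<^sub>R (\<Sum>j\<in>{1..m}. df i j u - df i j w)))" by (rule norm_sum)
    also have "\<dots> \<le> (\<Sum>i\<in>{1..n}. (1 / real m) * (\<Sum>j\<in>{1..m}. norm (df i j u - df i j w)))"
      by (intro sum_mono) (simp add: norm_sum divide_right_mono)
    finally show ?thesis by (simp add: divide_right_mono)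
  qed
  also have "\<dots> \<le> (1 / real n) * (\<Sum>i\<in>{1..n}. (1 / real m) * (\<Sum>j\<in>{1..m}. L * norm (u - w)))"
    by (intro mult_left_mono sum_mono) (auto intro: smooth)
  also have "\<dots> = L * norm (u - w)" using n m by simp
  finally show ?thesis .
qed

lemma F_deriv:
  fixes f :: "nat \<Rightarrow> nat \<Rightarrow> 'v::euclidean_space \<Rightarrow> real"
  assumes grad: "\<And>i j x. i \<in> {1..n} \<Longrightarrow> j \<in> {1..m} \<Longrightarrow>
                 (f i j has_derivative (\<lambda>h. df i j x \<bullet> h)) (at x)"
    and F_def: "F = (\<lambda>x. (1 / real n) * (\<Sum>i\<in>{1..n}. (1 / real m) * (\<Sum>j\<in>{1..m}. f i j x)))"
  shows "(F has_derivative (\<lambda>h. gradF n m df x \<bullet> h)) (at x)"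
proof -
  have "(F has_derivative (\<lambda>h. (1 / real n) * (\<Sum>i\<in>{1..n}. (1 / real m) * (\<Sum>j\<in>{1..m}. df i j x \<bullet> h)))) (at x)"
    unfolding F_def
    by (intro has_derivative_mult_right has_derivative_sum) (auto intro: grad)
  moreover have "(\<lambda>h. (1 / real n) * (\<Sum>i\<in>{1..n}. (1 / real m) * (\<Sum>j\<in>{1..m}. df i j x \<bullet> h))) = (\<lambda>h. gradF n m df x \<bullet> h)"
    by (simp add: gradF_def inner_sum_left)
  ultimately show ?thesis by simp
qed

lemma descent:
  fixes f :: "nat \<Rightarrow> nat \<Rightarrow> 'v::euclidean_space \<Rightarrow> real"
  assumes n: "n \<ge> 1" and m: "m \<ge> 1" and L: "L > 0"
    and grad: "\<And>i j x. i \<in> {1..n} \<Longrightarrow> j \<in> {1..m} \<Longrightarrow>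
                 (f i j has_derivative (\<lambda>h. df i j x \<bullet> h)) (at x)"
    and smooth: "\<And>i j x y. i \<in> {1..n} \<Longrightarrow> j \<in> {1..m} \<Longrightarrow> norm (df i j x - df i j y) \<le> L * norm (x - y)"
    and F_def: "F = (\<lambda>x. (1 / real n) * (\<Sum>i\<in>{1..n}. (1 / real m) * (\<Sum>j\<in>{1..m}. f i j x)))"
  shows "F (x + d) \<le> F x + gradF n m df x \<bullet> d + L * (norm d)\<^sup>2"
proof -
  let ?G = "gradF n m df"
  define \<phi> where "\<phi> = (\<lambda>t::real. F (x + t *\<^sub>R d))"
  have der: "(\<phi> has_real_derivative (?G (x + t *\<^sub>R d) \<bullet> d)) (at t)" for t
  proof -
    have "((\<lambda>t. x + t *\<^sub>R d) has_derivative (\<lambda>h. h *\<^sub>R d)) (at t)"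
      by (auto intro!: derivative_eq_intros)
    from has_derivative_compose[OF this F_deriv[OF grad F_def]]
    have "(\<phi> has_derivative (\<lambda>h. ?G (x + t *\<^sub>R d) \<bullet> (h *\<^sub>R d))) (at t)" by (simp add: \<phi>_def o_def)
    then show ?thesis unfolding has_field_derivative_def
      by (rule has_derivative_eq_rhs) (auto simp: fun_eq_iff)
  qed
  obtain \<theta> where th: "0 < \<theta>" "\<theta> < 1" "\<phi> 1 - \<phi> 0 = (1 - 0) * (?G (x + \<theta> *\<^sub>R d) \<bullet> d)"
    using MVT2[of 0 1 \<phi> "\<lambda>t. ?G (x + t *\<^sub>R d) \<bullet> d"] der by auto
  have "?G (x + \<theta> *\<^sub>R d) \<bullet> d = ?G x \<bullet> d + (?G (x + \<theta> *\<^sub>R d) - ?G x) \<bullet> d"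
    by (simp add: inner_diff_left)
  also have "(?G (x + \<theta> *\<^sub>R d) - ?G x) \<bullet> d \<le> norm (?G (x + \<theta> *\<^sub>R d) - ?G x) * norm d"
    by (rule norm_cauchy_schwarz)
  also have "\<dots> \<le> (L * norm (\<theta> *\<^sub>R d)) * norm d"
    using gradF_lip[OF n m smooth, where u="x + \<theta> *\<^sub>R d" and w=x] by (intro mult_right_mono) auto
  also have "\<dots> \<le> L * (norm d)\<^sup>2"
    using th L by (simp add: power2_eq_square mult_le_cancel_left1 mult.assoc mult_left_le_one_le)
  finally show ?thesis using th unfolding \<phi>_def by simp
qed

lemma grad_bound:
  fixes f :: "nat \<Rightarrow> nat \<Rightarrow> 'v::euclidean_space \<Rightarrow> real"
  assumes n: "n \<ge> 1" and m: "m \<ge> 1" and L: "L > 0"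
    and grad: "\<And>i j x. i \<in> {1..n} \<Longrightarrow> j \<in> {1..m} \<Longrightarrow>
                 (f i j has_derivative (\<lambda>h. df i j x \<bullet> h)) (at x)"
    and smooth: "\<And>i j x y. i \<in> {1..n} \<Longrightarrow> j \<in> {1..m} \<Longrightarrow> norm (df i j x - df i j y) \<le> L * norm (x - y)"
    and F_def: "F = (\<lambda>x. (1 / real n) * (\<Sum>i\<in>{1..n}. (1 / real m) * (\<Sum>j\<in>{1..m}. f i j x)))"
    and F_bdd: "bdd_below (range F)"
  shows "(norm (gradF n m df x))\<^sup>2 \<le> 4 * L * (F x - (INF x. F x))"
proof -
  let ?g = "gradF n m df x"
  have "(INF x. F x) \<le> F (x + (- 1 / (2 * L)) *\<^sub>R ?g)"
    using F_bdd by (rule cINF_lower) simp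
  also have "\<dots> \<le> F x + ?g \<bullet> ((- 1 / (2 * L)) *\<^sub>R ?g) + L * (norm ((- 1 / (2 * L)) *\<^sub>R ?g))\<^sup>2"
    by (rule descent[OF n m L grad smooth F_def])
  also have "\<dots> = F x - (norm ?g)\<^sup>2 / (4 * L)"
  proof -
    have a: "?g \<bullet> ((- 1 / (2 * L)) *\<^sub>R ?g) = (- 1 / (2 * L)) * (norm ?g)\<^sup>2"
      by (simp add: power2_norm_eq_inner)
    have b: "(norm ((- 1 / (2 * L)) *\<^sub>R ?g))\<^sup>2 = (1 / (2 * L))\<^sup>2 * (norm ?g)\<^sup>2"
      using L by (simp add: power_mult_distrib power_divide)
    show ?thesis unfolding a b using L by (simp add: field_simps power2_eq_square)
  qed
  finally show ?thesis using L by (simp add: field_simps)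
qed

definition tv :: "nat \<Rightarrow> nat \<Rightarrow> 'v::real_normed_vector \<Rightarrow> (nat \<Rightarrow> nat \<Rightarrow> 'v) \<Rightarrow> real" where
  "tv n m v z = (1 / real n) * (\<Sum>i\<in>{1..n}. (1 / real m) * (\<Sum>j\<in>{1..m}. (norm (v - z i j))\<^sup>2))"

lemma tval_tv: "tval n m x z = tv n m (avg n x) z"
  by (simp add: tval_def tv_def)

lemma young:
  fixes p q :: "'v::real_inner"
  assumes b: "\<beta> > 0"
  shows "(norm (p - q))\<^sup>2 \<le> (1 + \<beta>) * (norm p)\<^sup>2 + (1 + 1 / \<beta>) * (norm q)\<^sup>2"
proof -
  have "0 \<le> (norm (\<beta> *\<^sub>R p + q))\<^sup>2 / \<beta>" using b by simp
  also have "(norm (\<beta> *\<^sub>R p + q))\<^sup>2 = \<beta> * \<beta> * (norm p)\<^sup>2 + 2 * \<beta> * (p \<bullet> q) + (norm q)\<^sup>2"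
    by (simp add: power2_norm_eq_inner inner_add_left inner_add_right inner_commute algebra_simps)
  finally have "0 \<le> \<beta> * (norm p)\<^sup>2 + 2 * (p \<bullet> q) + (1 / \<beta>) * (norm q)\<^sup>2"
    using b by (simp add: field_simps)
  moreover have "(norm (p - q))\<^sup>2 = (norm p)\<^sup>2 - 2 * (p \<bullet> q) + (norm q)\<^sup>2"
    by (simp add: power2_norm_eq_inner inner_diff_left inner_diff_right inner_commute)
  ultimately show ?thesis by (simp add: algebra_simps)
qed

lemma sum3_swap:
  fixes c1 c2 :: real
  shows "(\<Sum>b\<in>P. c1 * (\<Sum>i\<in>I. c2 * (\<Sum>j\<in>J. f b i j))) = c1 * (\<Sum>i\<in>I. c2 * (\<Sum>j\<in>J. \<Sum>b\<in>P. f b i j))"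
proof -
  have "(\<Sum>b\<in>P. c1 * (\<Sum>i\<in>I. c2 * (\<Sum>j\<in>J. f b i j))) = (\<Sum>b\<in>P. \<Sum>i\<in>I. \<Sum>j\<in>J. c1 * c2 * f b i j)"
    by (simp add: sum_distrib_left mult.assoc)
  also have "\<dots> = (\<Sum>i\<in>I. \<Sum>b\<in>P. \<Sum>j\<in>J. c1 * c2 * f b i j)" by (rule sum.swap)
  also have "\<dots> = (\<Sum>i\<in>I. \<Sum>j\<in>J. \<Sum>b\<in>P. c1 * c2 * f b i j)" by (intro sum.cong refl sum.swap)
  also have "\<dots> = c1 * (\<Sum>i\<in>I. c2 * (\<Sum>j\<in>J. \<Sum>b\<in>P. f b i j))"
    by (simp add: sum_distrib_left mult.assoc)
  finally show ?thesis .
qed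

lemma a_sum:
  fixes r :: "'b \<Rightarrow> 'v::real_inner"
  assumes "(\<Sum>a\<in>P. r a) = 0"
  shows "(\<Sum>a\<in>P. (norm (u - \<alpha> *\<^sub>R r a))\<^sup>2) = real (card P) * (norm u)\<^sup>2 + \<alpha>\<^sup>2 * (\<Sum>a\<in>P. (norm (r a))\<^sup>2)"
proof -
  have e: "(norm (u - \<alpha> *\<^sub>R r a))\<^sup>2 = (norm u)\<^sup>2 - 2 * \<alpha> * (u \<bullet> r a) + \<alpha>\<^sup>2 * (norm (r a))\<^sup>2" for a
    unfolding power2_norm_eq_inner by (simp add: inner_diff_left inner_diff_right inner_commute algebra_simps power2_eq_square)
  have "(\<Sum>a\<in>P. u \<bullet> r a) = u \<bullet> (\<Sum>a\<in>P. r a)" by (simp add: inner_sum_right)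
  then have z: "(\<Sum>a\<in>P. u \<bullet> r a) = 0" using assms by simp
  have "(\<Sum>a\<in>P. (norm (u - \<alpha> *\<^sub>R r a))\<^sup>2) = (\<Sum>a\<in>P. (norm u)\<^sup>2) - 2 * \<alpha> * (\<Sum>a\<in>P. u \<bullet> r a) + \<alpha>\<^sup>2 * (\<Sum>a\<in>P. (norm (r a))\<^sup>2)"
    unfolding e by (simp add: sum.distrib sum_subtractf sum_distrib_left)
  then show ?thesis using z by simp
qed

lemma var_le:
  fixes d :: "nat \<Rightarrow> 'v::real_inner"
  assumes "finite S" "card S = m" "m > 0"
  shows "(\<Sum>c\<in>S. (norm (d c - (1 / real m) *\<^sub>R (\<Sum>j\<in>S. d j)))\<^sup>2) \<le> (\<Sum>c\<in>S. (norm (d c))\<^sup>2)"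
proof -
  define \<mu> where "\<mu> = (1 / real m) *\<^sub>R (\<Sum>j\<in>S. d j)"
  have s: "(\<Sum>j\<in>S. d j) = real m *\<^sub>R \<mu>" using assms by (simp add: \<mu>_def)
  have e: "(norm (d c - \<mu>))\<^sup>2 = (norm (d c))\<^sup>2 - 2 * (d c \<bullet> \<mu>) + (norm \<mu>)\<^sup>2" for c
    by (simp add: power2_norm_eq_inner inner_diff_left inner_diff_right inner_commute)
  have "(\<Sum>c\<in>S. (norm (d c - \<mu>))\<^sup>2) = (\<Sum>c\<in>S. (norm (d c))\<^sup>2) - 2 * ((\<Sum>c\<in>S. d c) \<bullet> \<mu>) + real m * (norm \<mu>)\<^sup>2"
    unfolding e using assms by (simp add: sum.distrib sum_subtractf sum_distrib_left inner_sum_left)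
  also have "\<dots> = (\<Sum>c\<in>S. (norm (d c))\<^sup>2) - real m * (norm \<mu>)\<^sup>2"
    unfolding s by (simp add: power2_norm_eq_inner)
  also have "\<dots> \<le> (\<Sum>c\<in>S. (norm (d c))\<^sup>2)" by simp
  finally show ?thesis unfolding \<mu>_def .
qed

lemma b_sum_alg:
  fixes A SB :: "nat \<Rightarrow> real" and K m n :: real
  assumes "m > 0"
  shows "(1/n) * (\<Sum>i\<in>I. (1/m) * (m * K * A i + K * (m - 1) * SB i))
       = (m * K) * ((1/m) * ((1/n) * (\<Sum>i\<in>I. A i)) + (1 - 1/m) * ((1/n) * (\<Sum>i\<in>I. (1/m) * SB i)))"
proof -
  have "(\<Sum>i\<in>I. (1/m) * (m * K * A i + K * (m - 1) * SB i)) = (\<Sum>i\<in>I. K * A i + (K * (m - 1)) * ((1/m) * SB i))"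
    using assms by (intro sum.cong refl) (simp add: field_simps)
  also have "\<dots> = K * (\<Sum>i\<in>I. A i) + (K * (m - 1)) * (\<Sum>i\<in>I. (1/m) * SB i)"
    by (simp add: sum.distrib sum_distrib_left)
  finally have e: "(\<Sum>i\<in>I. (1/m) * (m * K * A i + K * (m - 1) * SB i)) = K * (\<Sum>i\<in>I. A i) + (K * (m - 1)) * (\<Sum>i\<in>I. (1/m) * SB i)" .
  have g: "(1/n) * (K * a + K * (m - 1) * s) = (m * K) * ((1/m) * ((1/n) * a) + (1 - 1/m) * ((1/n) * s))" for a s
    using assms by (cases "n = 0") (simp_all add: field_simps)
  show ?thesis unfolding e by (rule g)
qed

lemma b_sum:
  fixes x :: "nat \<Rightarrow> 'v::real_normed_vector"
  assumes n: "n \<ge> 1" and m: "m \<ge> 1"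
  shows "(\<Sum>b\<in>PiE {1..n} (\<lambda>_. {1..m}). tv n m v (\<lambda>i j. if j = b i then x i else z i j))
       = real (m ^ n) * ((1 / real m) * ((1 / real n) * (\<Sum>i\<in>{1..n}. (norm (v - x i))\<^sup>2)) + (1 - 1 / real m) * tv n m v z)"
proof -
  let ?P = "PiE {1..n} (\<lambda>_. {1..m::nat})"
  have inner: "(\<Sum>b\<in>?P. (norm (v - (if j = b i then x i else z i j)))\<^sup>2)
      = real (m ^ (n - 1)) * ((norm (v - x i))\<^sup>2 + (real m - 1) * (norm (v - z i j))\<^sup>2)"
    if i: "i \<in> {1..n}" and j: "j \<in> {1..m}" for i j
  proof -
    have "(\<Sum>b\<in>?P. (norm (v - (if j = b i then x i else z i j)))\<^sup>2)
        = real (card {1..m} ^ (card {1..n} - 1)) * (\<Sum>c\<in>{1..m}. (norm (v - (if j = c then x i else z i j)))\<^sup>2)"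
      using sum_PiE_coord[OF i, of "\<lambda>c. (norm (v - (if j = c then x i else z i j)))\<^sup>2" "{1..m}"] by simp
    also have "(\<Sum>c\<in>{1..m}. (norm (v - (if j = c then x i else z i j)))\<^sup>2)
        = (norm (v - x i))\<^sup>2 + (\<Sum>c\<in>{1..m}-{j}. (norm (v - z i j))\<^sup>2)"
      using j by (simp add: sum.remove)
    also have "(\<Sum>c\<in>{1..m}-{j}. (norm (v - z i j))\<^sup>2) = (real m - 1) * (norm (v - z i j))\<^sup>2"
      using j m by (simp add: of_nat_diff)
    finally show ?thesis by simp
  qed
  have "(\<Sum>b\<in>?P. tv n m v (\<lambda>i j. if j = b i then x i else z i j))
      = (1 / real n) * (\<Sum>i\<in>{1..n}. (1 / real m) * (\<Sum>j\<in>{1..m}. \<Sum>b\<in>?P. (norm (v - (if j = b i then x i else z i j)))\<^sup>2))"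
    unfolding tv_def by (rule sum3_swap)
  also have "\<dots> = (1 / real n) * (\<Sum>i\<in>{1..n}. (1 / real m) * (\<Sum>j\<in>{1..m}.
          real (m ^ (n - 1)) * ((norm (v - x i))\<^sup>2 + (real m - 1) * (norm (v - z i j))\<^sup>2)))"
    apply (rule arg_cong[where f="\<lambda>s. (1/real n) * s"], rule sum.cong[OF refl])
    apply (rule arg_cong[where f="\<lambda>s. (1/real m) * s"], rule sum.cong[OF refl])
    by (rule inner) auto
  also have "\<dots> = real (m ^ n) * ((1 / real m) * ((1 / real n) * (\<Sum>i\<in>{1..n}. (norm (v - x i))\<^sup>2)) + (1 - 1 / real m) * tv n m v z)"
  proof -
    have mn: "real (m ^ n) = real m * real (m ^ (n - 1))"
      using n by (metis One_nat_def Suc_le_D diff_Suc_1 of_nat_mult power_Suc)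
    have "(\<Sum>j\<in>{1..m}. real (m ^ (n - 1)) * ((norm (v - x i))\<^sup>2 + (real m - 1) * (norm (v - z i j))\<^sup>2))
        = real m * real (m ^ (n - 1)) * (norm (v - x i))\<^sup>2 + real (m ^ (n - 1)) * (real m - 1) * (\<Sum>j\<in>{1..m}. (norm (v - z i j))\<^sup>2)" for i
    proof -
      have g: "(\<Sum>j\<in>S. K * (A + c * B j)) = real (card S) * K * A + K * c * (\<Sum>j\<in>S. B j)" for K A c :: real and B :: "nat \<Rightarrow> real" and S
      proof -
        have "(\<Sum>j\<in>S. K * (A + c * B j)) = (\<Sum>j\<in>S. K * A) + (\<Sum>j\<in>S. (K * c) * B j)"
          by (simp add: distrib_left sum.distrib mult.assoc)
        then show ?thesis by (simp add: sum_distrib_left[symmetric])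
      qed
      show ?thesis using g[of "real (m ^ (n - 1))" "(norm (v - x i))\<^sup>2" "real m - 1" "\<lambda>j. (norm (v - z i j))\<^sup>2" "{1..m}"]
        by simp
    qed
    then show ?thesis unfolding tv_def mn using m
      using b_sum_alg[of "real m" n "real (m ^ (n - 1))" "\<lambda>i. (norm (v - x i))\<^sup>2" "\<lambda>i. \<Sum>j\<in>{1..m}. (norm (v - z i j))\<^sup>2" "{1..n}"]
      by simp
  qed
  finally show ?thesis .
qed

definition Bv :: "nat \<Rightarrow> nat \<Rightarrow> (nat \<Rightarrow> 'v::real_normed_vector) \<Rightarrow> (nat \<Rightarrow> nat \<Rightarrow> 'v) \<Rightarrow> 'v \<Rightarrow> real" where
  "Bv n m x z v = (1 / real m) * ((1 / real n) * (\<Sum>i\<in>{1..n}. (norm (v - x i))\<^sup>2)) + (1 - 1 / real m) * tv n m v z"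

lemma avg_affine:
  fixes A :: "nat \<Rightarrow> real"
  assumes "n \<ge> 1"
  shows "(1 / real n) * (\<Sum>i\<in>{1..n}. N * A i + C) = N * ((1 / real n) * (\<Sum>i\<in>{1..n}. A i)) + C"
proof -
  have "(\<Sum>i\<in>{1..n}. N * A i + C) = N * (\<Sum>i\<in>{1..n}. A i) + real n * C"
    by (simp add: sum.distrib sum_distrib_left)
  then show ?thesis using assms by (simp add: field_simps)
qed

lemma Bv_sum:
  fixes v :: "'b \<Rightarrow> 'v::real_normed_vector"
  assumes n: "n \<ge> 1" and m: "m \<ge> 1"
    and h: "\<And>y. (\<Sum>a\<in>P. (norm (v a - y))\<^sup>2) = N * (norm (w - y))\<^sup>2 + C"
  shows "(\<Sum>a\<in>P. Bv n m x z (v a)) = N * Bv n m x z w + C"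
proof -
  have s1: "(\<Sum>a\<in>P. (1 / real n) * (\<Sum>i\<in>{1..n}. (norm (v a - x i))\<^sup>2))
      = (1 / real n) * (\<Sum>i\<in>{1..n}. N * (norm (w - x i))\<^sup>2 + C)"
  proof -
    have "(\<Sum>a\<in>P. (1 / real n) * (\<Sum>i\<in>{1..n}. (norm (v a - x i))\<^sup>2)) = (1 / real n) * (\<Sum>a\<in>P. \<Sum>i\<in>{1..n}. (norm (v a - x i))\<^sup>2)"
      by (rule sum_distrib_left[symmetric])
    also have "(\<Sum>a\<in>P. \<Sum>i\<in>{1..n}. (norm (v a - x i))\<^sup>2) = (\<Sum>i\<in>{1..n}. \<Sum>a\<in>P. (norm (v a - x i))\<^sup>2)"
      by (rule sum.swap)
    finally show ?thesis by (simp only: h)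
  qed
  have s2: "(\<Sum>a\<in>P. tv n m (v a) z) = (1 / real n) * (\<Sum>i\<in>{1..n}. (1 / real m) * (\<Sum>j\<in>{1..m}. N * (norm (w - z i j))\<^sup>2 + C))"
    unfolding tv_def by (subst sum3_swap) (simp add: h)
  have "(\<Sum>a\<in>P. Bv n m x z (v a)) = (1 / real m) * (\<Sum>a\<in>P. (1 / real n) * (\<Sum>i\<in>{1..n}. (norm (v a - x i))\<^sup>2))
        + (1 - 1 / real m) * (\<Sum>a\<in>P. tv n m (v a) z)"
    unfolding Bv_def by (simp add: sum.distrib sum_distrib_left)
  also have "\<dots> = (1 / real m) * (N * ((1 / real n) * (\<Sum>i\<in>{1..n}. (norm (w - x i))\<^sup>2)) + C)
        + (1 - 1 / real m) * (N * tv n m w z + C)"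
  proof -
    have "(1 / real n) * (\<Sum>i\<in>{1..n}. (1 / real m) * (\<Sum>j\<in>{1..m}. N * (norm (w - z i j))\<^sup>2 + C))
       = (1 / real n) * (\<Sum>i\<in>{1..n}. N * ((1 / real m) * (\<Sum>j\<in>{1..m}. (norm (w - z i j))\<^sup>2)) + C)"
      using avg_affine[OF m] by simp
    also have "\<dots> = N * tv n m w z + C" unfolding tv_def by (rule avg_affine[OF n])
    finally show ?thesis unfolding s1 using avg_affine[OF n] s2 by simp
  qed
  also have "\<dots> = N * Bv n m x z w + C" unfolding Bv_def by (simp add: algebra_simps)
  finally show ?thesis .
qed

lemma det_main:
  fixes f :: "nat \<Rightarrow> nat \<Rightarrow> 'v::euclidean_space \<Rightarrow> real"
    and df :: "nat \<Rightarrow> nat \<Rightarrow> 'v \<Rightarrow> 'v"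
    and x :: "nat \<Rightarrow> 'v" and z :: "nat \<Rightarrow> nat \<Rightarrow> 'v"
  assumes n: "n \<ge> 1" and m: "m \<ge> 1" and L: "L > 0"
    and grad: "\<And>i j x. i \<in> {1..n} \<Longrightarrow> j \<in> {1..m} \<Longrightarrow>
                 (f i j has_derivative (\<lambda>h. df i j x \<bullet> h)) (at x)"
    and smooth: "\<And>i j x y. i \<in> {1..n} \<Longrightarrow> j \<in> {1..m} \<Longrightarrow>
                 norm (df i j x - df i j y) \<le> L * norm (x - y)"
    and F_def: "F = (\<lambda>x. (1 / real n) * (\<Sum>i\<in>{1..n}. (1 / real m) * (\<Sum>j\<in>{1..m}. f i j x)))"
    and F_bdd: "bdd_below (range F)"
    and \<alpha>_pos: "\<alpha> > 0"
    and \<alpha>_le: "\<alpha> \<le> sqrt (real n) / (sqrt (8 * real m) * L)"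
  defines "gi \<equiv> \<lambda>i c. df i c (x i) - df i c (z i c) + (1 / real m) *\<^sub>R (\<Sum>j\<in>{1..m}. df i j (z i j))"
  shows "(\<Sum>(a, b)\<in>PiE {1..n} (\<lambda>_. {1..m}) \<times> PiE {1..n} (\<lambda>_. {1..m}).
            tv n m (avg n x - \<alpha> *\<^sub>R avg n (\<lambda>i. gi i (a i))) (\<lambda>i j. if j = b i then x i else z i j))
          / real (card (PiE {1..n} (\<lambda>_. {1..m}) \<times> PiE {1..n} (\<lambda>_. {1..m::nat})))
     \<le> (1 - 1 / (4 * real m)) * tv n m (avg n x) z
       + 16 * real m * \<alpha>\<^sup>2 * L * (F (avg n x) - (INF x. F x))
       + (8 * real m * \<alpha>\<^sup>2 * L\<^sup>2 + 9 / (4 * real m)) * (1 / real n) * cons_err n x"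
proof -
  define I where "I = {1..n}"
  define S where "S = {1..m}"
  define P where "P = PiE I (\<lambda>_. S)"
  define N where "N = real (m ^ n)"
  define xb where "xb = avg n x"
  define gfi where "gfi = (\<lambda>i u. (1 / real m) *\<^sub>R (\<Sum>j\<in>S. df i j u))"
  define h where "h = (1 / real n) *\<^sub>R (\<Sum>i\<in>I. gfi i (x i))"
  define e where "e = (\<lambda>i c. gi i c - gfi i (x i))"
  define r where "r = (\<lambda>a. (1 / real n) *\<^sub>R (\<Sum>i\<in>I. e i (a i)))"
  define c where "c = (1 / real n) * (\<Sum>i\<in>I. (norm (xb - x i))\<^sup>2)"
  define t where "t = tv n m xb z"
  define D where "D = F xb - (INF x. F x)"
  define H2 where "H2 = (norm h)\<^sup>2"
  define R where "R = (\<Sum>a\<in>P. (norm (r a))\<^sup>2)"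
  have finI: "finite I" and finS: "finite S" and cardI: "card I = n" and cardS: "card S = m"
    by (auto simp: I_def S_def)
  have cardP: "card P = m ^ n" unfolding P_def using finI cardI cardS by (simp add: card_PiE_const)
  have Npos: "N > 0" using m by (simp add: N_def)
  have finP: "finite P" unfolding P_def using finI finS by (simp add: finite_PiE)
  have cardQ: "real (card (P \<times> P)) = N * N" by (simp add: card_cartesian_product cardP N_def)
  have gb: "avg n (\<lambda>i. gi i (a i)) = h + r a" for a
  proof -
    have "avg n (\<lambda>i. gi i (a i)) = (1 / real n) *\<^sub>R (\<Sum>i\<in>I. gfi i (x i) + e i (a i))"
      by (simp add: avg_def e_def I_def)
    then show ?thesis by (simp add: h_def r_def sum.distrib scaleR_add_right)
  qed
  have esum: "(\<Sum>c\<in>S. e i c) = 0" if "i \<in> I" for i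
  proof -
    have "(\<Sum>c\<in>S. e i c) = (\<Sum>c\<in>S. df i c (x i)) - (\<Sum>c\<in>S. df i c (z i c)) + real m *\<^sub>R ((1 / real m) *\<^sub>R (\<Sum>j\<in>S. df i j (z i j)))
           - real m *\<^sub>R gfi i (x i)"
      by (simp add: e_def gi_def sum.distrib sum_subtractf S_def sum_constant_scaleR)
    also have "\<dots> = 0" using m by (simp add: gfi_def)
    finally show ?thesis .
  qed
  have rsum: "(\<Sum>a\<in>P. r a) = 0"
  proof -
    have "(\<Sum>a\<in>P. r a) = (1 / real n) *\<^sub>R (\<Sum>i\<in>I. \<Sum>a\<in>P. e i (a i))"
      by (simp add: r_def scaleR_sum_right[symmetric] sum.swap[of _ P])
    also have "\<dots> = 0" unfolding P_def
      by (simp add: sum_PiE_coord[OF _ finI] esum)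
    finally show ?thesis .
  qed
  have R_eq: "R = (1 / real n)\<^sup>2 * (real (m ^ (n - 1)) * (\<Sum>i\<in>I. \<Sum>c\<in>S. (norm (e i c))\<^sup>2))"
  proof -
    have "R = (\<Sum>a\<in>P. (1 / real n)\<^sup>2 * (norm (\<Sum>i\<in>I. e i (a i)))\<^sup>2)"
      unfolding R_def r_def by (simp add: power_mult_distrib power_divide)
    also have "\<dots> = (1 / real n)\<^sup>2 * (\<Sum>a\<in>P. (norm (\<Sum>i\<in>I. e i (a i)))\<^sup>2)"
      by (simp add: sum_distrib_left)
    also have "(\<Sum>a\<in>P. (norm (\<Sum>i\<in>I. e i (a i)))\<^sup>2) = real (m ^ (n - 1)) * (\<Sum>i\<in>I. \<Sum>c\<in>S. (norm (e i c))\<^sup>2)"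
      unfolding P_def using sum_PiE_var[OF finI esum] cardI cardS by simp
    finally show ?thesis .
  qed
  have e_le: "(\<Sum>c\<in>S. (norm (e i c))\<^sup>2) \<le> 2 * L\<^sup>2 * (real m * (norm (xb - x i))\<^sup>2 + (\<Sum>c\<in>S. (norm (xb - z i c))\<^sup>2))"
    if i: "i \<in> I" for i
  proof -
    define d where "d = (\<lambda>c. df i c (x i) - df i c (z i c))"
    have ed: "e i c = d c - (1 / real m) *\<^sub>R (\<Sum>j\<in>S. d j)" for c
      by (simp add: e_def gi_def gfi_def d_def S_def sum_subtractf scaleR_diff_right algebra_simps)
    have "(\<Sum>c\<in>S. (norm (e i c))\<^sup>2) \<le> (\<Sum>c\<in>S. (norm (d c))\<^sup>2)"
      unfolding ed using var_le[OF finS cardS, of d] m by simp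
    also have "\<dots> \<le> (\<Sum>c\<in>S. 2 * L\<^sup>2 * (norm (xb - x i))\<^sup>2 + 2 * L\<^sup>2 * (norm (xb - z i c))\<^sup>2)"
    proof (rule sum_mono)
      fix c assume c: "c \<in> S"
      have "norm (d c) \<le> L * norm (x i - z i c)"
        unfolding d_def using smooth i c by (simp add: I_def S_def)
      then have "(norm (d c))\<^sup>2 \<le> (L * norm (x i - z i c))\<^sup>2"
        by (intro power_mono) auto
      also have "\<dots> = L\<^sup>2 * (norm ((xb - z i c) - (xb - x i)))\<^sup>2"
        by (simp add: power_mult_distrib)
      also have "\<dots> \<le> L\<^sup>2 * ((1 + 1) * (norm (xb - z i c))\<^sup>2 + (1 + 1 / 1) * (norm (xb - x i))\<^sup>2)"
        by (intro mult_left_mono young) auto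
      finally show "(norm (d c))\<^sup>2 \<le> 2 * L\<^sup>2 * (norm (xb - x i))\<^sup>2 + 2 * L\<^sup>2 * (norm (xb - z i c))\<^sup>2"
        by (simp add: algebra_simps)
    qed
    also have "\<dots> = 2 * L\<^sup>2 * (real m * (norm (xb - x i))\<^sup>2 + (\<Sum>c\<in>S. (norm (xb - z i c))\<^sup>2))"
      using cardS by (simp add: sum.distrib sum_distrib_left algebra_simps)
    finally show ?thesis .
  qed
  have R_le: "R / N \<le> 2 * L\<^sup>2 / real n * (c + t)"
  proof -
    have "(\<Sum>i\<in>I. \<Sum>c\<in>S. (norm (e i c))\<^sup>2) \<le> (\<Sum>i\<in>I. 2 * L\<^sup>2 * (real m * (norm (xb - x i))\<^sup>2 + (\<Sum>c\<in>S. (norm (xb - z i c))\<^sup>2)))"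
      by (rule sum_mono) (rule e_le)
    also have "\<dots> = 2 * L\<^sup>2 * (real m * real n) * (c + t)"
    proof -
      have "c + t = (1 / real n) * (\<Sum>i\<in>I. (norm (xb - x i))\<^sup>2 + (1 / real m) * (\<Sum>c\<in>S. (norm (xb - z i c))\<^sup>2))"
        unfolding c_def t_def tv_def I_def S_def by (simp add: sum.distrib distrib_left)
      moreover have g: "real m * real n * ((1/real n) * (\<Sum>i\<in>I. A i + (1/real m) * B i)) = (\<Sum>i\<in>I. real m * A i + B i)"
        for A B :: "nat \<Rightarrow> real"
      proof -
        have "real m * real n * ((1/real n) * (\<Sum>i\<in>I. A i + (1/real m) * B i)) = real m * (\<Sum>i\<in>I. A i + (1/real m) * B i)"
          using n by simp
        also have "\<dots> = (\<Sum>i\<in>I. real m * A i + B i)"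
          using m by (simp add: sum_distrib_left distrib_left)
        finally show ?thesis .
      qed
      ultimately have "real m * real n * (c + t) = (\<Sum>i\<in>I. real m * (norm (xb - x i))\<^sup>2 + (\<Sum>c\<in>S. (norm (xb - z i c))\<^sup>2))"
        by simp
      then show ?thesis by (simp add: sum_distrib_left[symmetric] mult.assoc)
    qed
    finally have s: "(\<Sum>i\<in>I. \<Sum>c\<in>S. (norm (e i c))\<^sup>2) \<le> 2 * L\<^sup>2 * (real m * real n) * (c + t)" .
    have mn: "real (m ^ n) = real m * real (m ^ (n - 1))"
      using n by (metis One_nat_def Suc_le_D diff_Suc_1 of_nat_mult power_Suc)
    have "R \<le> (1 / real n)\<^sup>2 * (real (m ^ (n - 1)) * (2 * L\<^sup>2 * (real m * real n) * (c + t)))"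
      unfolding R_eq by (intro mult_left_mono s) auto
    also have "\<dots> = N * (2 * L\<^sup>2 / real n * (c + t))"
      unfolding N_def mn using n by (simp add: field_simps power2_eq_square)
    finally show ?thesis using Npos by (simp add: field_simps)
  qed
  have H2_le: "H2 \<le> 8 * L * D + 2 * L\<^sup>2 * c"
  proof -
    define G where "G = gradF n m df xb"
    have Gd: "G = (1 / real n) *\<^sub>R (\<Sum>i\<in>I. gfi i xb)" by (simp add: G_def gradF_def gfi_def I_def S_def)
    have gl: "norm (gfi i u - gfi i w) \<le> L * norm (u - w)" if i: "i \<in> I" for i u w
    proof -
      have "gfi i u - gfi i w = (1 / real m) *\<^sub>R (\<Sum>j\<in>S. df i j u - df i j w)"
        by (simp add: gfi_def sum_subtractf scaleR_diff_right)
      also have "norm \<dots> \<le> (1 / real m) * (\<Sum>j\<in>S. norm (df i j u - df i j w))"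
        by (simp add: norm_sum divide_right_mono)
      also have "\<dots> \<le> (1 / real m) * (\<Sum>j\<in>S. L * norm (u - w))"
        by (intro mult_left_mono sum_mono) (use i smooth in \<open>auto simp: I_def S_def\<close>)
      also have "\<dots> = L * norm (u - w)" using cardS m by simp
      finally show ?thesis .
    qed
    have "norm (h - G) \<le> (1 / real n) * (\<Sum>i\<in>I. L * norm (xb - x i))"
    proof -
      have "h - G = (1 / real n) *\<^sub>R (\<Sum>i\<in>I. gfi i (x i) - gfi i xb)"
        by (simp add: h_def Gd sum_subtractf scaleR_diff_right)
      also have "norm \<dots> \<le> (1 / real n) * (\<Sum>i\<in>I. norm (gfi i (x i) - gfi i xb))"
        by (simp add: norm_sum divide_right_mono)
      also have "\<dots> \<le> (1 / real n) * (\<Sum>i\<in>I. L * norm (xb - x i))"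
        by (intro mult_left_mono sum_mono) (auto simp: gl norm_minus_commute)
      finally show ?thesis .
    qed
    then have "(norm (h - G))\<^sup>2 \<le> ((1 / real n) * (\<Sum>i\<in>I. L * norm (xb - x i)))\<^sup>2"
      by (intro power_mono) auto
    also have "\<dots> = (1 / real n)\<^sup>2 * (\<Sum>i\<in>I. L * norm (xb - x i))\<^sup>2" by (simp add: power_mult_distrib power_divide)
    also have "\<dots> \<le> (1 / real n)\<^sup>2 * ((\<Sum>i\<in>I. (L * norm (xb - x i))\<^sup>2) * card I)"
      by (intro mult_left_mono sum_squared_le_sum_of_squares) auto
    also have "\<dots> = L\<^sup>2 * c"
      unfolding c_def cardI using n by (simp add: power_mult_distrib sum_distrib_left[symmetric] power2_eq_square field_simps)
    finally have hG: "(norm (h - G))\<^sup>2 \<le> L\<^sup>2 * c" .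
    have "H2 = (norm (G - (G - h)))\<^sup>2" by (simp add: H2_def)
    also have "\<dots> \<le> (1 + 1) * (norm G)\<^sup>2 + (1 + 1 / 1) * (norm (G - h))\<^sup>2" by (rule young) simp
    also have "(norm G)\<^sup>2 \<le> 4 * L * D"
      unfolding G_def D_def by (rule grad_bound[OF n m L grad smooth F_def F_bdd])
    finally show ?thesis using hG by (simp add: norm_minus_commute)
  qed
  define w where "w = xb - \<alpha> *\<^sub>R h"
  have vsum: "(\<Sum>a\<in>P. (norm ((xb - \<alpha> *\<^sub>R avg n (\<lambda>i. gi i (a i))) - y))\<^sup>2) = N * (norm (w - y))\<^sup>2 + \<alpha>\<^sup>2 * R" for y
  proof -
    have q: "(xb - \<alpha> *\<^sub>R avg n (\<lambda>i. gi i (a i))) - y = (w - y) - \<alpha> *\<^sub>R r a" for a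
      by (simp add: gb w_def scaleR_add_right algebra_simps)
    have "(\<Sum>a\<in>P. (norm ((xb - \<alpha> *\<^sub>R avg n (\<lambda>i. gi i (a i))) - y))\<^sup>2) = (\<Sum>a\<in>P. (norm ((w - y) - \<alpha> *\<^sub>R r a))\<^sup>2)"
      by (simp only: q)
    then show ?thesis using a_sum[OF rsum, of "w - y" \<alpha>] cardP by (simp add: R_def N_def)
  qed
  have total: "(\<Sum>(a, b)\<in>P \<times> P. tv n m (xb - \<alpha> *\<^sub>R avg n (\<lambda>i. gi i (a i))) (\<lambda>i j. if j = b i then x i else z i j))
      = N * (N * Bv n m x z w + \<alpha>\<^sup>2 * R)"
  proof -
    have "(\<Sum>(a, b)\<in>P \<times> P. tv n m (xb - \<alpha> *\<^sub>R avg n (\<lambda>i. gi i (a i))) (\<lambda>i j. if j = b i then x i else z i j))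
       = (\<Sum>a\<in>P. \<Sum>b\<in>P. tv n m (xb - \<alpha> *\<^sub>R avg n (\<lambda>i. gi i (a i))) (\<lambda>i j. if j = b i then x i else z i j))"
      by (rule sum.cartesian_product[symmetric])
    also have "\<dots> = (\<Sum>a\<in>P. N * Bv n m x z (xb - \<alpha> *\<^sub>R avg n (\<lambda>i. gi i (a i))))"
      apply (rule sum.cong[OF refl])
      unfolding P_def I_def S_def N_def Bv_def by (rule b_sum[OF n m])
    also have "\<dots> = N * (\<Sum>a\<in>P. Bv n m x z (xb - \<alpha> *\<^sub>R avg n (\<lambda>i. gi i (a i))))"
      by (simp add: sum_distrib_left)
    also have "(\<Sum>a\<in>P. Bv n m x z (xb - \<alpha> *\<^sub>R avg n (\<lambda>i. gi i (a i)))) = N * Bv n m x z w + \<alpha>\<^sup>2 * R"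
      by (rule Bv_sum[OF n m vsum])
    finally show ?thesis .
  qed
  have Bv_le: "Bv n m x z w \<le> (1 / real m) * (2 * c + 2 * (\<alpha>\<^sup>2 * H2))
        + (1 - 1 / real m) * ((1 + 1 / (2 * real m)) * t + (1 + 2 * real m) * (\<alpha>\<^sup>2 * H2))"
  proof -
    have ah: "(norm (\<alpha> *\<^sub>R h))\<^sup>2 = \<alpha>\<^sup>2 * H2" by (simp add: H2_def power_mult_distrib)
    have y: "(norm (w - y))\<^sup>2 \<le> (1 + \<beta>) * (norm (xb - y))\<^sup>2 + (1 + 1 / \<beta>) * (\<alpha>\<^sup>2 * H2)" if "\<beta> > 0" for y \<beta>
    proof -
      have "w - y = (xb - y) - \<alpha> *\<^sub>R h" by (simp add: w_def algebra_simps)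
      then have "(norm (w - y))\<^sup>2 = (norm ((xb - y) - \<alpha> *\<^sub>R h))\<^sup>2" by (simp only:)
      then show ?thesis using young[OF that, of "xb - y" "\<alpha> *\<^sub>R h"] unfolding ah by simp
    qed
    have p1: "(1 / real n) * (\<Sum>i\<in>{1..n}. (norm (w - x i))\<^sup>2) \<le> 2 * c + 2 * (\<alpha>\<^sup>2 * H2)"
    proof -
      have "(1 / real n) * (\<Sum>i\<in>{1..n}. (norm (w - x i))\<^sup>2) \<le> (1 / real n) * (\<Sum>i\<in>{1..n}. 2 * (norm (xb - x i))\<^sup>2 + 2 * (\<alpha>\<^sup>2 * H2))"
        using y[of 1] by (intro mult_left_mono sum_mono) auto
      also have "\<dots> = 2 * c + 2 * (\<alpha>\<^sup>2 * H2)" unfolding c_def I_def by (rule avg_affine[OF n])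
      finally show ?thesis .
    qed
    have p2: "tv n m w z \<le> (1 + 1 / (2 * real m)) * t + (1 + 2 * real m) * (\<alpha>\<^sup>2 * H2)"
    proof -
      have b: "1 / (2 * real m) > 0" using m by simp
      have "tv n m w z \<le> (1 / real n) * (\<Sum>i\<in>{1..n}. (1 / real m) * (\<Sum>j\<in>{1..m}.
              (1 + 1 / (2 * real m)) * (norm (xb - z i j))\<^sup>2 + (1 + 2 * real m) * (\<alpha>\<^sup>2 * H2)))"
        unfolding tv_def using y[OF b] by (intro mult_left_mono sum_mono) auto
      also have "\<dots> = (1 / real n) * (\<Sum>i\<in>{1..n}. (1 + 1 / (2 * real m)) * ((1 / real m) * (\<Sum>j\<in>{1..m}. (norm (xb - z i j))\<^sup>2))
                 + (1 + 2 * real m) * (\<alpha>\<^sup>2 * H2))"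
        using avg_affine[OF m] by simp
      also have "\<dots> = (1 + 1 / (2 * real m)) * t + (1 + 2 * real m) * (\<alpha>\<^sup>2 * H2)"
        unfolding t_def tv_def by (rule avg_affine[OF n])
      finally show ?thesis .
    qed
    have "1 - 1 / real m \<ge> 0" using m by simp
    then show ?thesis unfolding Bv_def using p1 p2 m
      by (intro add_mono mult_left_mono) auto
  qed
  have c0: "c \<ge> 0" unfolding c_def by (auto intro!: sum_nonneg divide_nonneg_nonneg)
  have t0: "t \<ge> 0" unfolding t_def tv_def by (auto intro!: sum_nonneg mult_nonneg_nonneg divide_nonneg_nonneg)
  have X0: "\<alpha>\<^sup>2 * H2 \<ge> 0" unfolding H2_def by simp
  have A4: "\<alpha>\<^sup>2 * (8 * real m * L\<^sup>2) \<le> real n"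
  proof -
    have s8: "sqrt (8 * real m) > 0" using m by simp
    have "\<alpha> * (sqrt (8 * real m) * L) \<le> sqrt (real n)"
      using \<alpha>_le s8 L by (simp add: field_simps)
    then have "(\<alpha> * (sqrt (8 * real m) * L))\<^sup>2 \<le> (sqrt (real n))\<^sup>2"
      using \<alpha>_pos s8 L by (intro power_mono) auto
    then show ?thesis by (simp add: power_mult_distrib algebra_simps)
  qed
  have k: "\<alpha>\<^sup>2 * (2 * L\<^sup>2 / real n) \<le> 1 / (4 * real m)"
    using A4 n m by (simp add: field_simps)
  have A: "\<alpha>\<^sup>2 * (R / N) \<le> (1 / (4 * real m)) * (c + t)"
  proof -
    have "\<alpha>\<^sup>2 * (R / N) \<le> \<alpha>\<^sup>2 * (2 * L\<^sup>2 / real n * (c + t))"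
      using R_le by (intro mult_left_mono) auto
    also have "\<dots> = (\<alpha>\<^sup>2 * (2 * L\<^sup>2 / real n)) * (c + t)" by simp
    also have "\<dots> \<le> (1 / (4 * real m)) * (c + t)" using k c0 t0 by (intro mult_right_mono) auto
    finally show ?thesis .
  qed
  have T1: "(1 / real m) * (2 * c + 2 * (\<alpha>\<^sup>2 * H2)) + (1 - 1 / real m) * ((1 + 1 / (2 * real m)) * t + (1 + 2 * real m) * (\<alpha>\<^sup>2 * H2))
         + (1 / (4 * real m)) * (c + t) \<le> (1 - 1 / (4 * real m)) * t + 2 * real m * (\<alpha>\<^sup>2 * H2) + 9 / (4 * real m) * c"
  proof -
    have "(1 - 1 / (4 * real m)) * t + 2 * real m * (\<alpha>\<^sup>2 * H2) + 9 / (4 * real m) * c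
       - ((1 / real m) * (2 * c + 2 * (\<alpha>\<^sup>2 * H2)) + (1 - 1 / real m) * ((1 + 1 / (2 * real m)) * t + (1 + 2 * real m) * (\<alpha>\<^sup>2 * H2))
         + (1 / (4 * real m)) * (c + t)) = t / (2 * (real m)\<^sup>2) + (\<alpha>\<^sup>2 * H2) * (1 - 1 / real m)"
      using m by (simp add: field_simps power2_eq_square)
    moreover have "t / (2 * (real m)\<^sup>2) + (\<alpha>\<^sup>2 * H2) * (1 - 1 / real m) \<ge> 0"
      using t0 X0 m by (intro add_nonneg_nonneg mult_nonneg_nonneg divide_nonneg_nonneg) (auto simp: H2_def)
    ultimately show ?thesis by linarith
  qed
  have T2: "2 * real m * (\<alpha>\<^sup>2 * H2) \<le> 16 * real m * \<alpha>\<^sup>2 * L * D + 4 * real m * \<alpha>\<^sup>2 * L\<^sup>2 * c"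
  proof -
    have "2 * real m * (\<alpha>\<^sup>2 * H2) \<le> 2 * real m * (\<alpha>\<^sup>2 * (8 * L * D + 2 * L\<^sup>2 * c))"
      using H2_le by (intro mult_left_mono) auto
    then show ?thesis by (simp add: algebra_simps)
  qed
  have T3: "4 * real m * \<alpha>\<^sup>2 * L\<^sup>2 * c \<le> 8 * real m * \<alpha>\<^sup>2 * L\<^sup>2 * c" using c0 by simp
  have cons: "(1 / real n) * cons_err n x = c"
    unfolding cons_err_def c_def xb_def I_def by (simp add: norm_minus_commute)
  have lhs: "(\<Sum>(a, b)\<in>P \<times> P. tv n m (xb - \<alpha> *\<^sub>R avg n (\<lambda>i. gi i (a i))) (\<lambda>i j. if j = b i then x i else z i j))
          / real (card (P \<times> P)) = Bv n m x z w + \<alpha>\<^sup>2 * (R / N)"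
    unfolding total cardQ using Npos by (simp add: field_simps)
  have "(\<Sum>(a, b)\<in>P \<times> P. tv n m (xb - \<alpha> *\<^sub>R avg n (\<lambda>i. gi i (a i))) (\<lambda>i j. if j = b i then x i else z i j))
          / real (card (P \<times> P)) \<le> (1 - 1 / (4 * real m)) * t + 16 * real m * \<alpha>\<^sup>2 * L * D
            + (8 * real m * \<alpha>\<^sup>2 * L\<^sup>2 + 9 / (4 * real m)) * c"
  proof -
    have d: "(8 * real m * \<alpha>\<^sup>2 * L\<^sup>2 + 9 / (4 * real m)) * c = 8 * real m * \<alpha>\<^sup>2 * L\<^sup>2 * c + 9 / (4 * real m) * c"
      by (simp add: distrib_right)
    show ?thesis unfolding lhs d using Bv_le A T1 T2 T3 by linarith
  qed
  then show ?thesis unfolding P_def I_def S_def xb_def t_def D_def cons[symmetric] by (simp add: mult.assoc)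
qed

definition stepf ::
  "(nat \<Rightarrow> nat \<Rightarrow> real) \<Rightarrow> (nat \<Rightarrow> nat \<Rightarrow> 'v::real_normed_vector \<Rightarrow> 'v) \<Rightarrow> nat \<Rightarrow> nat \<Rightarrow> real
   \<Rightarrow> (nat \<Rightarrow> 'v) \<times> (nat \<Rightarrow> 'v) \<times> (nat \<Rightarrow> 'v) \<times> (nat \<Rightarrow> nat \<Rightarrow> 'v) \<Rightarrow> (nat \<Rightarrow> nat) \<Rightarrow> (nat \<Rightarrow> nat)
   \<Rightarrow> (nat \<Rightarrow> 'v) \<times> (nat \<Rightarrow> 'v) \<times> (nat \<Rightarrow> 'v) \<times> (nat \<Rightarrow> nat \<Rightarrow> 'v)" where
  "stepf W df n m \<alpha> st a b =
     (case st of (x, y, gp, z) \<Rightarrow>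
       let g = (\<lambda>i. df i (a i) (x i) - df i (a i) (z i (a i))
                    + (1 / real m) *\<^sub>R (\<Sum>j\<in>{1..m}. df i j (z i j)));
           y' = (\<lambda>i. \<Sum>r\<in>{1..n}. W i r *\<^sub>R (y r + g r - gp r));
           x' = (\<lambda>i. \<Sum>r\<in>{1..n}. W i r *\<^sub>R (x r - \<alpha> *\<^sub>R y' r));
           z' = (\<lambda>i j. if j = b i then x i else z i j)
       in (x', y', g, z'))"

lemma gt_saga_Suc':
  "gt_saga W df n m \<alpha> x0 tau s (Suc k) = stepf W df n m \<alpha> (gt_saga W df n m \<alpha> x0 tau s k) (tau k) (s k)"
  by (simp add: stepf_def)

definition releq :: "nat \<Rightarrow> (nat \<Rightarrow> 'v) \<times> (nat \<Rightarrow> 'v) \<times> (nat \<Rightarrow> 'v) \<times> (nat \<Rightarrow> nat \<Rightarrow> 'v)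
    \<Rightarrow> (nat \<Rightarrow> 'v) \<times> (nat \<Rightarrow> 'v) \<times> (nat \<Rightarrow> 'v) \<times> (nat \<Rightarrow> nat \<Rightarrow> 'v) \<Rightarrow> bool" where
  "releq n st st' \<longleftrightarrow> (\<forall>i\<in>{1..n}. fst st i = fst st' i \<and> fst (snd st) i = fst (snd st') i
      \<and> fst (snd (snd st)) i = fst (snd (snd st')) i \<and> snd (snd (snd st)) i = snd (snd (snd st')) i)"

lemma step_cong:
  assumes "releq n st st'" "\<forall>i\<in>{1..n}. a i = a' i \<and> b i = b' i"
  shows "releq n (stepf W df n m \<alpha> st a b) (stepf W df n m \<alpha> st' a' b')"
proof -
  obtain x y gp z where st: "st = (x, y, gp, z)" by (cases st) auto
  obtain x' y' gp' z' where st': "st' = (x', y', gp', z')" by (cases st') auto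
  have e: "\<forall>i\<in>{1..n}. x i = x' i \<and> y i = y' i \<and> gp i = gp' i \<and> z i = z' i"
    using assms(1) by (simp add: releq_def st st')
  define g where "g = (\<lambda>i. df i (a i) (x i) - df i (a i) (z i (a i)) + (1 / real m) *\<^sub>R (\<Sum>j\<in>{1..m}. df i j (z i j)))"
  define g' where "g' = (\<lambda>i. df i (a' i) (x' i) - df i (a' i) (z' i (a' i)) + (1 / real m) *\<^sub>R (\<Sum>j\<in>{1..m}. df i j (z' i j)))"
  have gg: "\<forall>i\<in>{1..n}. g i = g' i" using e assms(2) by (simp add: g_def g'_def)
  have yy: "(\<Sum>r\<in>{1..n}. W i r *\<^sub>R (y r + g r - gp r)) = (\<Sum>r\<in>{1..n}. W i r *\<^sub>R (y' r + g' r - gp' r))" for i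
    using e gg by (intro sum.cong) auto
  have xx: "(\<Sum>r\<in>{1..n}. W i r *\<^sub>R (x r - \<alpha> *\<^sub>R (\<Sum>q\<in>{1..n}. W r q *\<^sub>R (y q + g q - gp q))))
          = (\<Sum>r\<in>{1..n}. W i r *\<^sub>R (x' r - \<alpha> *\<^sub>R (\<Sum>q\<in>{1..n}. W r q *\<^sub>R (y' q + g' q - gp' q))))" for i
    using e yy by (intro sum.cong) auto
  show ?thesis unfolding stepf_def st st' Let_def releq_def
    using xx yy gg e assms(2) by (simp add: g_def[symmetric] g'_def[symmetric] fun_eq_iff)
qed

lemma saga_cong:
  assumes "\<forall>t<k. \<forall>i\<in>{1..n}. tau t i = tau' t i \<and> s t i = s' t i"
  shows "releq n (gt_saga W df n m \<alpha> x0 tau s k) (gt_saga W df n m \<alpha> x0 tau' s' k)"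
  using assms
proof (induction k)
  case 0 then show ?case by (simp add: releq_def)
next
  case (Suc k)
  then show ?case unfolding gt_saga_Suc' by (intro step_cong) auto
qed

lemma colsum:
  fixes v :: "nat \<Rightarrow> 'v::real_vector"
  assumes "\<forall>r\<in>{1..n}. (\<Sum>i\<in>{1..n}. W i r) = 1"
  shows "(\<Sum>i\<in>{1..n}. \<Sum>r\<in>{1..n}. W i r *\<^sub>R v r) = (\<Sum>r\<in>{1..n}. v r)"
proof -
  have "(\<Sum>i\<in>{1..n}. \<Sum>r\<in>{1..n}. W i r *\<^sub>R v r) = (\<Sum>r\<in>{1..n}. (\<Sum>i\<in>{1..n}. W i r) *\<^sub>R v r)"
    by (subst sum.swap) (simp add: scaleR_sum_left)
  also have "\<dots> = (\<Sum>r\<in>{1..n}. v r)" using assms by simp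
  finally show ?thesis .
qed

lemma step_avg:
  fixes x :: "nat \<Rightarrow> 'v::real_normed_vector" and df :: "nat \<Rightarrow> nat \<Rightarrow> 'v \<Rightarrow> 'v"
    and z :: "nat \<Rightarrow> nat \<Rightarrow> 'v" and a :: "nat \<Rightarrow> nat" and m :: nat
  assumes col: "\<forall>r\<in>{1..n}. (\<Sum>i\<in>{1..n}. W i r) = 1"
    and inv: "avg n y = avg n gp"
  defines "g \<equiv> (\<lambda>i. df i (a i) (x i) - df i (a i) (z i (a i)) + (1 / real m) *\<^sub>R (\<Sum>j\<in>{1..m}. df i j (z i j)))"
  shows "avg n (fst (stepf W df n m \<alpha> (x, y, gp, z) a b)) = avg n x - \<alpha> *\<^sub>R avg n g"
    and "avg n (fst (snd (stepf W df n m \<alpha> (x, y, gp, z) a b))) = avg n (fst (snd (snd (stepf W df n m \<alpha> (x, y, gp, z) a b))))"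
    and "snd (snd (snd (stepf W df n m \<alpha> (x, y, gp, z) a b))) = (\<lambda>i j. if j = b i then x i else z i j)"
    and "fst (snd (snd (stepf W df n m \<alpha> (x, y, gp, z) a b))) = g"
proof -
  define y' where "y' = (\<lambda>i. \<Sum>r\<in>{1..n}. W i r *\<^sub>R (y r + g r - gp r))"
  have st: "stepf W df n m \<alpha> (x, y, gp, z) a b = ((\<lambda>i. \<Sum>r\<in>{1..n}. W i r *\<^sub>R (x r - \<alpha> *\<^sub>R y' r)), y', g,
              (\<lambda>i j. if j = b i then x i else z i j))"
    unfolding stepf_def Let_def g_def y'_def by simp
  have ay: "avg n y' = avg n g"
  proof -
    have "avg n y' = (1 / real n) *\<^sub>R (\<Sum>r\<in>{1..n}. y r + g r - gp r)"
      unfolding avg_def y'_def using colsum[OF col, of "\<lambda>r. y r + g r - gp r"] by simp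
    also have "\<dots> = avg n y + avg n g - avg n gp"
      by (simp add: avg_def sum.distrib sum_subtractf scaleR_add_right scaleR_diff_right)
    finally show ?thesis using inv by simp
  qed
  show "avg n (fst (stepf W df n m \<alpha> (x, y, gp, z) a b)) = avg n x - \<alpha> *\<^sub>R avg n g"
  proof -
    have "avg n (fst (stepf W df n m \<alpha> (x, y, gp, z) a b)) = (1 / real n) *\<^sub>R (\<Sum>r\<in>{1..n}. x r - \<alpha> *\<^sub>R y' r)"
      unfolding st avg_def using colsum[OF col, of "\<lambda>r. x r - \<alpha> *\<^sub>R y' r"] by simp
    also have "\<dots> = avg n x - \<alpha> *\<^sub>R avg n y'"
      by (simp add: avg_def sum_subtractf scaleR_diff_right scaleR_sum_right)
    finally show ?thesis using ay by simp
  qed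
  show "avg n (fst (snd (stepf W df n m \<alpha> (x, y, gp, z) a b))) = avg n (fst (snd (snd (stepf W df n m \<alpha> (x, y, gp, z) a b))))"
    unfolding st using ay by simp
  show "snd (snd (snd (stepf W df n m \<alpha> (x, y, gp, z) a b))) = (\<lambda>i j. if j = b i then x i else z i j)"
    unfolding st by simp
  show "fst (snd (snd (stepf W df n m \<alpha> (x, y, gp, z) a b))) = g" unfolding st by simp
qed

lemma saga_inv:
  assumes col: "\<forall>r\<in>{1..n}. (\<Sum>i\<in>{1..n}. W i r) = 1"
  shows "avg n (fst (snd (gt_saga W df n m \<alpha> x0 tau s k))) = avg n (fst (snd (snd (gt_saga W df n m \<alpha> x0 tau s k))))"
proof (induction k)
  case 0 then show ?case by (simp add: avg_def)
next
  case (Suc k)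
  obtain x y gp z where st: "gt_saga W df n m \<alpha> x0 tau s k = (x, y, gp, z)" by (cases "gt_saga W df n m \<alpha> x0 tau s k") auto
  show ?case unfolding gt_saga_Suc' st using step_avg(2)[OF col] Suc st by simp
qed

lemma releq_vals:
  assumes "releq n st st'"
  shows "avg n (fst st) = avg n (fst st')"
    and "tval n m (fst st) (snd (snd (snd st))) = tval n m (fst st') (snd (snd (snd st')))"
    and "cons_err n (fst st) = cons_err n (fst st')"
proof -
  have e: "\<forall>i\<in>{1..n}. fst st i = fst st' i \<and> snd (snd (snd st)) i = snd (snd (snd st')) i"
    using assms by (simp add: releq_def)
  show a: "avg n (fst st) = avg n (fst st')" unfolding avg_def using e by simp
  show "tval n m (fst st) (snd (snd (snd st))) = tval n m (fst st') (snd (snd (snd st')))"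
    unfolding tval_def a using e by simp
  show "cons_err n (fst st) = cons_err n (fst st')"
    unfolding cons_err_def a using e by simp
qed

lemma releq_refl: "releq n st st" by (simp add: releq_def)

lemma det_step:
  fixes f :: "nat \<Rightarrow> nat \<Rightarrow> 'v::euclidean_space \<Rightarrow> real"
    and df :: "nat \<Rightarrow> nat \<Rightarrow> 'v \<Rightarrow> 'v"
    and x :: "nat \<Rightarrow> 'v" and z :: "nat \<Rightarrow> nat \<Rightarrow> 'v"
  assumes n: "n \<ge> 1" and m: "m \<ge> 1" and L: "L > 0"
    and grad: "\<And>i j x. i \<in> {1..n} \<Longrightarrow> j \<in> {1..m} \<Longrightarrow>
                 (f i j has_derivative (\<lambda>h. df i j x \<bullet> h)) (at x)"
    and smooth: "\<And>i j x y. i \<in> {1..n} \<Longrightarrow> j \<in> {1..m} \<Longrightarrow>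
                 norm (df i j x - df i j y) \<le> L * norm (x - y)"
    and F_def: "F = (\<lambda>x. (1 / real n) * (\<Sum>i\<in>{1..n}. (1 / real m) * (\<Sum>j\<in>{1..m}. f i j x)))"
    and F_bdd: "bdd_below (range F)"
    and \<alpha>_pos: "\<alpha> > 0"
    and \<alpha>_le: "\<alpha> \<le> sqrt (real n) / (sqrt (8 * real m) * L)"
    and col: "\<forall>r\<in>{1..n}. (\<Sum>i\<in>{1..n}. W i r) = 1"
    and inv: "avg n y = avg n gp"
  shows "(\<Sum>q\<in>PiE {1..n} (\<lambda>_. {1..m}) \<times> PiE {1..n} (\<lambda>_. {1..m}).
            tval n m (fst (stepf W df n m \<alpha> (x, y, gp, z) (fst q) (snd q))) (snd (snd (snd (stepf W df n m \<alpha> (x, y, gp, z) (fst q) (snd q))))))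
          / real (card (PiE {1..n} (\<lambda>_. {1..m}) \<times> PiE {1..n} (\<lambda>_. {1..m::nat})))
     \<le> (1 - 1 / (4 * real m)) * tval n m x z
       + 16 * real m * \<alpha>\<^sup>2 * L * (F (avg n x) - (INF x. F x))
       + (8 * real m * \<alpha>\<^sup>2 * L\<^sup>2 + 9 / (4 * real m)) * (1 / real n) * cons_err n x"
proof -
  have eq: "tval n m (fst (stepf W df n m \<alpha> (x, y, gp, z) a b)) (snd (snd (snd (stepf W df n m \<alpha> (x, y, gp, z) a b))))
      = tv n m (avg n x - \<alpha> *\<^sub>R avg n (\<lambda>i. df i (a i) (x i) - df i (a i) (z i (a i)) +
              (1 / real m) *\<^sub>R (\<Sum>j = 1..m. df i j (z i j)))) (\<lambda>i j. if j = b i then x i else z i j)" for a b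
    unfolding tval_tv step_avg(1,3)[OF col inv] by (rule refl)
  have "(\<Sum>q\<in>PiE {1..n} (\<lambda>_. {1..m}) \<times> PiE {1..n} (\<lambda>_. {1..m}).
            tval n m (fst (stepf W df n m \<alpha> (x, y, gp, z) (fst q) (snd q))) (snd (snd (snd (stepf W df n m \<alpha> (x, y, gp, z) (fst q) (snd q))))))
      = (\<Sum>(a, b)\<in>PiE {1..n} (\<lambda>_. {1..m}) \<times> PiE {1..n} (\<lambda>_. {1..m}).
            tv n m (avg n x - \<alpha> *\<^sub>R avg n (\<lambda>i. df i (a i) (x i) - df i (a i) (z i (a i)) +
              (1 / real m) *\<^sub>R (\<Sum>j = 1..m. df i j (z i j)))) (\<lambda>i j. if j = b i then x i else z i j))"
    by (intro sum.cong refl) (simp only: eq split_beta)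
  then show ?thesis
    using det_main[OF n m L grad smooth F_def F_bdd \<alpha>_pos \<alpha>_le, where x=x and z=z]
    unfolding tval_tv by (simp only:)
qed

lemma meas_countable_range:
  fixes h :: "'b \<Rightarrow> real"
  assumes cnt: "countable (U ` space N)"
    and lev: "\<And>p. p \<in> U ` space N \<Longrightarrow> {\<omega>\<in>space N. U \<omega> = p} \<in> sets N"
  shows "(\<lambda>\<omega>. h (U \<omega>)) \<in> borel_measurable N"
proof (rule measurableI)
  fix A :: "real set" assume "A \<in> sets borel"
  have "(\<lambda>\<omega>. h (U \<omega>)) -` A \<inter> space N = (\<Union>p\<in>U ` space N \<inter> {p. h p \<in> A}. {\<omega>\<in>space N. U \<omega> = p})"
    by auto
  also have "\<dots> \<in> sets N"
    by (rule sets.countable_UN'') (use cnt lev in \<open>auto intro: countable_subset\<close>)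
  finally show "(\<lambda>\<omega>. h (U \<omega>)) -` A \<inter> space N \<in> sets N" .
qed simp

context sigma_finite_subalgebra
begin

lemma indep_int:
  assumes prob: "prob_space M"
    and Z: "Z \<in> borel_measurable F" "integrable M Z"
    and Bs: "Bs \<in> sets M"
    and ind: "\<And>A. A \<in> sets F \<Longrightarrow> measure M (A \<inter> Bs) = measure M A * p"
  shows "(\<integral>\<omega>. Z \<omega> * indicator Bs \<omega> \<partial>M) = p * (\<integral>\<omega>. Z \<omega> \<partial>M)"
proof -
  interpret P: prob_space M by (rule prob)
  have FM: "A \<in> sets F \<Longrightarrow> A \<in> sets M" for A using subalg by (auto simp: subalgebra_def)
  have sp: "space F = space M" using subalg by (auto simp: subalgebra_def)
  have intB: "integrable M (indicator Bs :: 'a \<Rightarrow> real)" using Bs by (intro integrable_real_indicator) (auto simp: P.emeasure_eq_measure)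
  have ce: "AE \<omega> in M. real_cond_exp M F (indicator Bs) \<omega> = p"
  proof (rule real_cond_exp_charact)
    fix A assume A: "A \<in> sets F"
    have "(\<integral>\<omega>\<in>A. indicator Bs \<omega> \<partial>M) = (\<integral>\<omega>. indicator (A \<inter> Bs) \<omega> \<partial>M)"
      unfolding set_lebesgue_integral_def by (intro Bochner_Integration.integral_cong) (auto split: split_indicator)
    also have "\<dots> = measure M (A \<inter> Bs)" using FM[OF A] Bs sets.sets_into_space[OF Bs] by (simp add: Int_absorb2 inf.absorb1)
    also have "\<dots> = measure M A * p" by (rule ind[OF A])
    also have "\<dots> = (\<integral>\<omega>\<in>A. p \<partial>M)" using FM[OF A] sets.sets_into_space[OF FM[OF A]] unfolding set_lebesgue_integral_def by (simp add: Int_absorb2)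
    finally show "(\<integral>\<omega>\<in>A. indicator Bs \<omega> \<partial>M) = (\<integral>\<omega>\<in>A. p \<partial>M)" .
  qed (use intB in auto)
  have int2: "integrable M (\<lambda>\<omega>. Z \<omega> * indicator Bs \<omega>)"
    using integrable_mult_indicator[OF Bs Z(2)] by (simp add: mult.commute)
  have "(\<integral>\<omega>. Z \<omega> * indicator Bs \<omega> \<partial>M) = (\<integral>\<omega>. Z \<omega> * real_cond_exp M F (indicator Bs) \<omega> \<partial>M)"
    by (rule real_cond_exp_intg(2)[symmetric]) (use int2 Z Bs in auto)
  also have "\<dots> = (\<integral>\<omega>. Z \<omega> * p \<partial>M)"
    by (rule integral_cong_AE) (use ce Z measurable_from_subalg[OF subalg] in \<open>auto\<close>)
  also have "\<dots> = p * (\<integral>\<omega>. Z \<omega> \<partial>M)" by simp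
  finally show ?thesis .
qed

lemma condexp_discrete:
  fixes G :: "'q \<Rightarrow> 'a \<Rightarrow> real" and Vn :: "'a \<Rightarrow> 'q"
  assumes prob: "prob_space M"
    and finQ: "finite Q" and Qne: "Q \<noteq> {}"
    and Bm: "\<And>q. q \<in> Q \<Longrightarrow> {\<omega>\<in>space M. Vn \<omega> = q} \<in> sets M"
    and AEQ: "AE \<omega> in M. Vn \<omega> \<in> Q"
    and ind: "\<And>A q. A \<in> sets F \<Longrightarrow> q \<in> Q \<Longrightarrow> measure M (A \<inter> {\<omega>\<in>space M. Vn \<omega> = q}) = measure M A * (1 / real (card Q))"
    and Gm: "\<And>q. q \<in> Q \<Longrightarrow> G q \<in> borel_measurable F"
    and Gb: "\<And>q. q \<in> Q \<Longrightarrow> AE \<omega> in M. \<bar>G q \<omega>\<bar> \<le> C"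
    and Tm: "T \<in> borel_measurable M"
    and TG: "\<And>\<omega>. \<omega> \<in> space M \<Longrightarrow> Vn \<omega> \<in> Q \<Longrightarrow> T \<omega> = G (Vn \<omega>) \<omega>"
  shows "AE \<omega> in M. real_cond_exp M F T \<omega> = (\<Sum>q\<in>Q. G q \<omega>) / real (card Q)"
proof -
  interpret P: prob_space M by (rule prob)
  define B where "B = (\<lambda>q. {\<omega>\<in>space M. Vn \<omega> = q})"
  have FM: "A \<in> sets F \<Longrightarrow> A \<in> sets M" for A using subalg by (auto simp: subalgebra_def)
  have GmM: "q \<in> Q \<Longrightarrow> G q \<in> borel_measurable M" for q using measurable_from_subalg[OF subalg Gm] by blast
  have Gi: "q \<in> Q \<Longrightarrow> integrable M (G q)" for q
    by (rule P.integrable_const_bound[where B=C]) (use Gb GmM in auto)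
  have AEall: "AE \<omega> in M. \<forall>q\<in>Q. \<bar>G q \<omega>\<bar> \<le> C" using finQ Gb by (intro AE_finite_allI) auto
  have Ti: "integrable M T"
  proof (rule P.integrable_const_bound[where B=C])
    show "AE \<omega> in M. norm (T \<omega>) \<le> C"
      using AEall AEQ AE_space by eventually_elim (use TG in auto)
  qed (rule Tm)
  define Y where "Y = (\<lambda>\<omega>. (\<Sum>q\<in>Q. G q \<omega>) / real (card Q))"
  have YF: "Y \<in> borel_measurable F" unfolding Y_def using Gm by measurable
  have Yi: "integrable M Y" unfolding Y_def using Gi by auto
  have "AE \<omega> in M. real_cond_exp M F T \<omega> = Y \<omega>"
  proof (rule real_cond_exp_charact[OF _ Ti Yi YF])
    fix A assume A: "A \<in> sets F"
    have AM: "A \<in> sets M" by (rule FM[OF A])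
    have ZF: "(\<lambda>\<omega>. indicator A \<omega> * G q \<omega>) \<in> borel_measurable F" if "q \<in> Q" for q
      using Gm[OF that] A by measurable
    have Zi: "integrable M (\<lambda>\<omega>. indicator A \<omega> * G q \<omega>)" if "q \<in> Q" for q
      using integrable_mult_indicator[OF AM Gi[OF that]] by simp
    have key: "(\<integral>\<omega>. indicator A \<omega> * G q \<omega> * indicator (B q) \<omega> \<partial>M) = (1 / real (card Q)) * (\<integral>\<omega>. indicator A \<omega> * G q \<omega> \<partial>M)"
      if q: "q \<in> Q" for q
      by (rule indep_int[OF prob ZF[OF q] Zi[OF q]]) (use Bm q ind B_def in auto)
    have "(\<integral>\<omega>\<in>A. T \<omega> \<partial>M) = (\<integral>\<omega>. (\<Sum>q\<in>Q. indicator A \<omega> * G q \<omega> * indicator (B q) \<omega>) \<partial>M)"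
      unfolding set_lebesgue_integral_def
    proof (rule integral_cong_AE)
      show "(\<lambda>\<omega>. indicator A \<omega> *\<^sub>R T \<omega>) \<in> borel_measurable M" using Tm AM by measurable
      show "(\<lambda>\<omega>. \<Sum>q\<in>Q. indicator A \<omega> * G q \<omega> * indicator (B q) \<omega>) \<in> borel_measurable M"
        using GmM AM Bm by (auto simp: B_def intro!: borel_measurable_sum)
      show "AE \<omega> in M. indicator A \<omega> *\<^sub>R T \<omega> = (\<Sum>q\<in>Q. indicator A \<omega> * G q \<omega> * indicator (B q) \<omega>)"
        using AEQ
      proof eventually_elim
        case (elim \<omega>)
        show ?case
        proof (cases "\<omega> \<in> space M")
          case True
          have "(\<Sum>q\<in>Q. indicator A \<omega> * G q \<omega> * indicator (B q) \<omega>) = (\<Sum>q\<in>Q. if q = Vn \<omega> then indicator A \<omega> * G q \<omega> else 0)"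
            using True by (intro sum.cong) (auto simp: B_def indicator_def)
          also have "\<dots> = indicator A \<omega> * G (Vn \<omega>) \<omega>" using finQ elim by (simp add: sum.delta')
          finally show ?thesis using TG[OF True elim] by simp
        next
          case False
          then have "\<omega> \<notin> A" "\<And>q. \<omega> \<notin> B q" using sets.sets_into_space[OF AM] by (auto simp: B_def)
          then show ?thesis by simp
        qed
      qed
    qed
    also have "\<dots> = (\<Sum>q\<in>Q. (\<integral>\<omega>. indicator A \<omega> * G q \<omega> * indicator (B q) \<omega> \<partial>M))"
    proof (rule Bochner_Integration.integral_sum[where f="\<lambda>q \<omega>. indicator A \<omega> * G q \<omega> * indicator (B q) \<omega>"])
      fix q assume q: "q \<in> Q"
      show "integrable M (\<lambda>\<omega>. indicator A \<omega> * G q \<omega> * indicator (B q) \<omega>)"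
        using integrable_mult_indicator[OF _ Zi[OF q], of "B q"] Bm[OF q] by (simp add: B_def mult.commute)
    qed
    also have "\<dots> = (\<Sum>q\<in>Q. (1 / real (card Q)) * (\<integral>\<omega>. indicator A \<omega> * G q \<omega> \<partial>M))"
      by (intro sum.cong refl key)
    also have "\<dots> = (\<integral>\<omega>. indicator A \<omega> * ((\<Sum>q\<in>Q. G q \<omega>) / real (card Q)) \<partial>M)"
    proof -
      have "(\<integral>\<omega>. indicator A \<omega> * ((\<Sum>q\<in>Q. G q \<omega>) / real (card Q)) \<partial>M)
          = (\<integral>\<omega>. (\<Sum>q\<in>Q. (1 / real (card Q)) * (indicator A \<omega> * G q \<omega>)) \<partial>M)"
        by (simp add: sum_distrib_left sum_divide_distrib)
      also have "\<dots> = (\<Sum>q\<in>Q. (\<integral>\<omega>. (1 / real (card Q)) * (indicator A \<omega> * G q \<omega>) \<partial>M))"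
        by (rule Bochner_Integration.integral_sum[where f="\<lambda>q \<omega>. (1 / real (card Q)) * (indicator A \<omega> * G q \<omega>)"]) (use Zi in auto)
      finally show ?thesis by simp
    qed
    finally show "(\<integral>\<omega>\<in>A. T \<omega> \<partial>M) = (\<integral>\<omega>\<in>A. Y \<omega> \<partial>M)"
      unfolding set_lebesgue_integral_def Y_def by simp
  qed
  then show ?thesis by (simp add: Y_def)
qed

end

definition fgens where
  "fgens M tau s n k = (\<Union>t\<in>{..<k}. \<Union>i\<in>{1..n}. {tau t i -` A \<inter> space M | A. True} \<union> {s t i -` A \<inter> space M | A. True})"

lemma fgens_Pow: "fgens M tau s n k \<subseteq> Pow (space M)"
  unfolding fgens_def by auto

lemma filt_space: "space (filt M tau s n k) = space M"
  unfolding filt_def by (simp add: space_measure_of_conv)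

lemma filt_sets: "sets (filt M tau s n k) = sigma_sets (space M) (fgens M tau s n k)"
  unfolding filt_def fgens_def[symmetric] by (rule sets_measure_of[OF fgens_Pow])

lemma filt_subalg:
  assumes tau_rv: "\<And>t i. i \<in> {1..n} \<Longrightarrow> tau t i \<in> measurable M (count_space UNIV)"
    and s_rv: "\<And>t i. i \<in> {1..n} \<Longrightarrow> s t i \<in> measurable M (count_space UNIV)"
  shows "subalgebra M (filt M tau s n k)"
proof -
  have "fgens M tau s n k \<subseteq> sets M"
    unfolding fgens_def using tau_rv s_rv by (auto intro: measurable_sets)
  then have "sigma_sets (space M) (fgens M tau s n k) \<subseteq> sets M" by (rule sets.sigma_sets_subset)
  then show ?thesis unfolding subalgebra_def filt_space filt_sets by simp
qed

lemma filt_meas: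
  assumes "t < k" "i \<in> {1..n}"
  shows "tau t i \<in> measurable (filt M tau s n k) (count_space UNIV)"
    and "s t i \<in> measurable (filt M tau s n k) (count_space UNIV)"
proof -
  show "tau t i \<in> measurable (filt M tau s n k) (count_space UNIV)"
  proof (rule measurableI)
    fix A :: "nat set"
    have "tau t i -` A \<inter> space M \<in> fgens M tau s n k" unfolding fgens_def using assms by blast
    then show "tau t i -` A \<inter> space (filt M tau s n k) \<in> sets (filt M tau s n k)"
      unfolding filt_space filt_sets by (rule sigma_sets.Basic)
  qed simp
  show "s t i \<in> measurable (filt M tau s n k) (count_space UNIV)"
  proof (rule measurableI)
    fix A :: "nat set"
    have "s t i -` A \<inter> space M \<in> fgens M tau s n k" unfolding fgens_def using assms by blast
    then show "s t i -` A \<inter> space (filt M tau s n k) \<in> sets (filt M tau s n k)"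
      unfolding filt_space filt_sets by (rule sigma_sets.Basic)
  qed simp
qed

lemma unif_single:
  assumes Z: "Z \<in> measurable M (count_space UNIV)"
    and d: "distr M (count_space UNIV) Z = measure_pmf (pmf_of_set {1..m::nat})"
    and m: "m \<ge> 1" and v: "v \<in> {1..m}"
  shows "measure M (Z -` {v} \<inter> space M) = 1 / real m"
proof -
  have "measure M (Z -` {v} \<inter> space M) = measure (distr M (count_space UNIV) Z) {v}"
    by (rule measure_distr[OF Z, symmetric]) simp
  also have "\<dots> = 1 / real m" unfolding d measure_pmf_single using m v by simp
  finally show ?thesis .
qed

lemma unif_AE:
  assumes Z: "Z \<in> measurable M (count_space UNIV)"
    and d: "distr M (count_space UNIV) Z = measure_pmf (pmf_of_set {1..m::nat})"
    and m: "m \<ge> 1"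
  shows "AE \<omega> in M. Z \<omega> \<in> {1..m}"
proof -
  have "AE x in distr M (count_space UNIV) Z. x \<in> {1..m}"
    unfolding d using m by (simp add: AE_measure_pmf_iff)
  then show ?thesis by (subst (asm) AE_distr_iff[OF Z]) auto
qed

lemma indep_part:
  fixes tau s :: "nat \<Rightarrow> nat \<Rightarrow> 'a \<Rightarrow> nat"
  assumes prob: "prob_space M" and n: "n \<ge> 1" and m: "m \<ge> 1"
    and tau_rv: "\<And>t i. i \<in> {1..n} \<Longrightarrow> tau t i \<in> measurable M (count_space UNIV)"
    and s_rv: "\<And>t i. i \<in> {1..n} \<Longrightarrow> s t i \<in> measurable M (count_space UNIV)"
    and tau_unif: "\<And>t i. i \<in> {1..n} \<Longrightarrow>
                 distr M (count_space UNIV) (tau t i) = measure_pmf (pmf_of_set {1..m})"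
    and s_unif: "\<And>t i. i \<in> {1..n} \<Longrightarrow>
                 distr M (count_space UNIV) (s t i) = measure_pmf (pmf_of_set {1..m})"
    and indep: "prob_space.indep_vars M (\<lambda>_. count_space UNIV)
                 (\<lambda>c. case c of Inl (t, i) \<Rightarrow> tau t i | Inr (t, i) \<Rightarrow> s t i)
                 ({(t, i). i \<in> {1..n}} <+> {(t, i). i \<in> {1..n}})"
    and A: "A \<in> sets (filt M tau s n k)"
    and ab: "a \<in> PiE {1..n} (\<lambda>_. {1..m})" "b \<in> PiE {1..n} (\<lambda>_. {1..m})"
  shows "measure M (A \<inter> {\<omega>\<in>space M. (restrict (\<lambda>i. tau k i \<omega>) {1..n}, restrict (\<lambda>i. s k i \<omega>) {1..n}) = (a, b)})
       = measure M A * (1 / real (card (PiE {1..n} (\<lambda>_. {1..m}) \<times> PiE {1..n} (\<lambda>_. {1..m::nat}))))"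
proof -
  interpret prob_space M by (rule prob)
  define X where "X = (\<lambda>c. case c of Inl (t, i) \<Rightarrow> tau t i | Inr (t, i) \<Rightarrow> s t (i::nat))"
  define Jall where "Jall = ({(t::nat, i). i \<in> {1..n}} <+> {(t::nat, i). i \<in> {1..n}})"
  define E where "E = (\<lambda>c. {X c -` B \<inter> space M | B. B \<in> sets (count_space (UNIV :: nat set))})"
  define Past where "Past = Inl ` ({..<k} \<times> {1..n}) \<union> Inr ` ({..<k} \<times> {1..n})"
  define Now where "Now = Inl ` ({k} \<times> {1..n}) \<union> Inr ` ({k} \<times> {1..n::nat})"
  define Ix where "Ix = (\<lambda>j::bool. if j then Past else Now)"
  have iE: "indep_sets E Jall" using indep unfolding indep_vars_def2 E_def X_def Jall_def by simp
  have sub: "(\<Union>j. Ix j) \<subseteq> Jall" unfolding Ix_def Past_def Now_def Jall_def by auto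
  have iE2: "indep_sets E (\<Union>j. Ix j)" by (rule indep_sets_mono_index[OF sub iE])
  have ist: "Int_stable (E c)" for c
    unfolding Int_stable_def
  proof (intro ballI)
    fix a1 a2 assume "a1 \<in> E c" "a2 \<in> E c"
    then obtain B1 B2 where "a1 = X c -` B1 \<inter> space M" "a2 = X c -` B2 \<inter> space M" unfolding E_def by auto
    then have "a1 \<inter> a2 = X c -` (B1 \<inter> B2) \<inter> space M" by auto
    then show "a1 \<inter> a2 \<in> E c" unfolding E_def
      by (simp only: mem_Collect_eq) (rule exI[where x="B1 \<inter> B2"], simp)
  qed
  have dj: "disjoint_family_on Ix UNIV"
    unfolding disjoint_family_on_def Ix_def Past_def Now_def by auto
  have ic: "indep_sets (\<lambda>j. sigma_sets (space M) (\<Union>c\<in>Ix j. E c)) UNIV"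
    by (rule indep_sets_collect_sigma[OF iE2 ist dj])
  have iset: "indep_set (sigma_sets (space M) (\<Union>c\<in>Past. E c)) (sigma_sets (space M) (\<Union>c\<in>Now. E c))"
  proof -
    have "(\<lambda>j. sigma_sets (space M) (\<Union>c\<in>Ix j. E c)) = case_bool (sigma_sets (space M) (\<Union>c\<in>Past. E c)) (sigma_sets (space M) (\<Union>c\<in>Now. E c))"
      by (rule ext) (simp add: Ix_def split: bool.split)
    then show ?thesis unfolding indep_set_def using ic by simp
  qed
  have gens: "fgens M tau s n k = (\<Union>c\<in>Past. E c)"
  proof (intro set_eqI iffI)
    fix U assume "U \<in> fgens M tau s n k"
    then obtain t i where ti: "t < k" "i \<in> {1..n}" and
      U: "U \<in> {tau t i -` A \<inter> space M | A. True} \<or> U \<in> {s t i -` A \<inter> space M | A. True}"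
      unfolding fgens_def by blast
    from U show "U \<in> (\<Union>c\<in>Past. E c)"
    proof (elim disjE)
      assume "U \<in> {tau t i -` A \<inter> space M | A. True}"
      then obtain A where "U = tau t i -` A \<inter> space M" by blast
      then have "U \<in> E (Inl (t, i))" unfolding E_def X_def by (simp only: mem_Collect_eq) (rule exI[where x=A], simp)
      moreover have "Inl (t, i) \<in> Past" using ti unfolding Past_def by auto
      ultimately show ?thesis by blast
    next
      assume "U \<in> {s t i -` A \<inter> space M | A. True}"
      then obtain A where "U = s t i -` A \<inter> space M" by blast
      then have "U \<in> E (Inr (t, i))" unfolding E_def X_def by (simp only: mem_Collect_eq) (rule exI[where x=A], simp)
      moreover have "Inr (t, i) \<in> Past" using ti unfolding Past_def by auto
      ultimately show ?thesis by blast
    qed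
  next
    fix U assume "U \<in> (\<Union>c\<in>Past. E c)"
    then obtain c where c: "c \<in> Past" and "U \<in> E c" by blast
    then obtain A where UA: "U = X c -` A \<inter> space M" unfolding E_def by blast
    from c obtain t i where ti: "t < k" "i \<in> {1..n}" and cc: "c = Inl (t, i) \<or> c = Inr (t, i)"
      unfolding Past_def by auto
    from cc show "U \<in> fgens M tau s n k"
    proof (elim disjE)
      assume "c = Inl (t, i)"
      then have "U \<in> {tau t i -` A \<inter> space M | A. True}" using UA unfolding X_def by auto
      then show ?thesis unfolding fgens_def using ti by blast
    next
      assume "c = Inr (t, i)"
      then have "U \<in> {s t i -` A \<inter> space M | A. True}" using UA unfolding X_def by auto
      then show ?thesis unfolding fgens_def using ti by blast
    qed
  qed
  have A1: "A \<in> sigma_sets (space M) (\<Union>c\<in>Past. E c)" using A unfolding filt_sets gens .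
  define qf where "qf = (\<lambda>c. case c of Inl (t::nat, i) \<Rightarrow> a i | Inr (t::nat, i) \<Rightarrow> b (i::nat))"
  define B where "B = {\<omega>\<in>space M. (restrict (\<lambda>i. tau k i \<omega>) {1..n}, restrict (\<lambda>i. s k i \<omega>) {1..n}) = (a, b)}"
  have Beq: "B = (\<Inter>c\<in>Now. X c -` {qf c} \<inter> space M)"
  proof -
    have r: "(restrict (\<lambda>i. tau k i \<omega>) {1..n}, restrict (\<lambda>i. s k i \<omega>) {1..n}) = (a, b) \<longleftrightarrow>
          (\<forall>i\<in>{1..n}. tau k i \<omega> = a i \<and> s k i \<omega> = b i)" for \<omega>
      using ab by (auto simp: fun_eq_iff PiE_def extensional_def restrict_def)
    have nw: "(\<forall>c\<in>Now. X c \<omega> = qf c) \<longleftrightarrow> (\<forall>i\<in>{1..n}. tau k i \<omega> = a i \<and> s k i \<omega> = b i)" for \<omega>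
    proof
      assume h: "\<forall>c\<in>Now. X c \<omega> = qf c"
      show "\<forall>i\<in>{1..n}. tau k i \<omega> = a i \<and> s k i \<omega> = b i"
      proof
        fix i assume i: "i \<in> {1..n}"
        have "Inl (k, i) \<in> Now" "Inr (k, i) \<in> Now" using i unfolding Now_def by auto
        then show "tau k i \<omega> = a i \<and> s k i \<omega> = b i" using h unfolding X_def qf_def by force
      qed
    next
      assume h: "\<forall>i\<in>{1..n}. tau k i \<omega> = a i \<and> s k i \<omega> = b i"
      show "\<forall>c\<in>Now. X c \<omega> = qf c"
      proof
        fix c assume "c \<in> Now"
        then obtain i where i: "i \<in> {1..n}" and "c = Inl (k, i) \<or> c = Inr (k, i)" unfolding Now_def by auto
        then show "X c \<omega> = qf c" using h unfolding X_def qf_def by auto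
      qed
    qed
    have ne: "Now \<noteq> {}" using n unfolding Now_def by auto
    show ?thesis
    proof (intro set_eqI iffI)
      fix \<omega> assume "\<omega> \<in> B"
      then have "\<omega> \<in> space M" "\<forall>c\<in>Now. X c \<omega> = qf c" unfolding B_def r nw by auto
      then show "\<omega> \<in> (\<Inter>c\<in>Now. X c -` {qf c} \<inter> space M)" by blast
    next
      fix \<omega> assume w: "\<omega> \<in> (\<Inter>c\<in>Now. X c -` {qf c} \<inter> space M)"
      then have "\<omega> \<in> space M" using ne by blast
      moreover have "\<forall>c\<in>Now. X c \<omega> = qf c" using w by blast
      ultimately show "\<omega> \<in> B" unfolding B_def r nw[symmetric] by blast
    qed
  qed
  have NowE: "X c -` {qf c} \<inter> space M \<in> E c" for c unfolding E_def by auto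
  have finNow: "finite Now" and Nowne: "Now \<noteq> {}" using n unfolding Now_def by auto
  have B1: "B \<in> sigma_sets (space M) (\<Union>c\<in>Now. E c)"
  proof -
    interpret S: sigma_algebra "space M" "sigma_sets (space M) (\<Union>c\<in>Now. E c)"
      by (rule sigma_algebra_sigma_sets) (auto simp: E_def)
    show ?thesis unfolding Beq
      by (rule S.finite_INT[OF finNow Nowne]) (auto intro: sigma_sets.Basic NowE)
  qed
  have pAB: "prob (A \<inter> B) = prob A * prob B" by (rule indep_setD[OF iset A1 B1])
  have NowJ: "Now \<subseteq> Jall" unfolding Now_def Jall_def by auto
  have pB: "prob B = (\<Prod>c\<in>Now. prob (X c -` {qf c} \<inter> space M))"
    unfolding Beq by (rule indep_setsD[OF iE NowJ Nowne finNow]) (auto intro: NowE)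
  also have "\<dots> = (\<Prod>c\<in>Now. 1 / real m)"
  proof (rule prod.cong[OF refl])
    fix c assume c: "c \<in> Now"
    then obtain i where i: "i \<in> {1..n}" and cc: "c = Inl (k, i) \<or> c = Inr (k, i)" unfolding Now_def by auto
    from cc show "prob (X c -` {qf c} \<inter> space M) = 1 / real m"
    proof (elim disjE)
      assume c: "c = Inl (k, i)"
      have "a i \<in> {1..m}" using ab i by auto
      then show ?thesis unfolding c X_def qf_def using unif_single[OF tau_rv[OF i] tau_unif[OF i] m] by simp
    next
      assume c: "c = Inr (k, i)"
      have "b i \<in> {1..m}" using ab i by auto
      then show ?thesis unfolding c X_def qf_def using unif_single[OF s_rv[OF i] s_unif[OF i] m] by simp
    qed
  qed
  also have "\<dots> = (1 / real m) ^ (2 * n)"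
  proof -
    have "card Now = card (Inl ` ({k} \<times> {1..n}) :: ((nat \<times> nat) + (nat \<times> nat)) set) + card (Inr ` ({k} \<times> {1..n}) :: ((nat \<times> nat) + (nat \<times> nat)) set)"
      unfolding Now_def by (rule card_Un_disjoint) auto
    also have "\<dots> = 2 * n" by (simp add: card_image card_cartesian_product)
    finally show ?thesis by simp
  qed
  also have "\<dots> = 1 / real (card (PiE {1..n} (\<lambda>_. {1..m}) \<times> PiE {1..n} (\<lambda>_. {1..m::nat})))"
    by (simp add: card_cartesian_product card_PiE power_mult_distrib power_divide mult_2 power_add)
  finally show ?thesis using pAB unfolding B_def by simp
qed

lemma level_set:
  fixes tau s :: "nat \<Rightarrow> nat \<Rightarrow> 'a \<Rightarrow> nat"
  assumes fin: "finite D"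
    and meas: "\<And>c. c \<in> D \<Longrightarrow> tau (fst c) (snd c) \<in> measurable N (count_space UNIV) \<and> s (fst c) (snd c) \<in> measurable N (count_space UNIV)"
  shows "{\<omega>\<in>space N. \<forall>c\<in>D. tau (fst c) (snd c) \<omega> = f c \<and> s (fst c) (snd c) \<omega> = g c} \<in> sets N"
proof (rule sets.sets_Collect_finite_All[OF _ fin])
  fix c assume c: "c \<in> D"
  have "{\<omega>\<in>space N. tau (fst c) (snd c) \<omega> = f c \<and> s (fst c) (snd c) \<omega> = g c}
      = (tau (fst c) (snd c) -` {f c} \<inter> space N) \<inter> (s (fst c) (snd c) -` {g c} \<inter> space N)" by auto
  also have "\<dots> \<in> sets N" using meas[OF c] by (intro sets.Int measurable_sets) auto
  finally show "{\<omega>\<in>space N. tau (fst c) (snd c) \<omega> = f c \<and> s (fst c) (snd c) \<omega> = g c} \<in> sets N" .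
qed

lemma restr_meas:
  fixes tau s :: "nat \<Rightarrow> nat \<Rightarrow> 'a \<Rightarrow> nat" and h :: "((nat \<times> nat \<Rightarrow> nat) \<times> (nat \<times> nat \<Rightarrow> nat)) \<Rightarrow> real"
  assumes fin: "finite D"
    and meas: "\<And>c. c \<in> D \<Longrightarrow> tau (fst c) (snd c) \<in> measurable N (count_space UNIV) \<and> s (fst c) (snd c) \<in> measurable N (count_space UNIV)"
  shows "(\<lambda>\<omega>. h (restrict (\<lambda>c. tau (fst c) (snd c) \<omega>) D, restrict (\<lambda>c. s (fst c) (snd c) \<omega>) D)) \<in> borel_measurable N"
proof -
  define U where "U = (\<lambda>\<omega>. (restrict (\<lambda>c. tau (fst c) (snd c) \<omega>) D, restrict (\<lambda>c. s (fst c) (snd c) \<omega>) D))"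
  have "(\<lambda>\<omega>. h (U \<omega>)) \<in> borel_measurable N"
  proof (rule meas_countable_range[where U=U and h=h])
  let ?U = U
  have "?U ` space N \<subseteq> PiE D (\<lambda>_. UNIV) \<times> PiE D (\<lambda>_. UNIV)" by (auto simp: U_def)
  moreover have "countable (PiE D (\<lambda>_. UNIV :: nat set) \<times> PiE D (\<lambda>_. UNIV :: nat set))"
    using fin by (intro countable_SIGMA countable_PiE) auto
  ultimately show "countable (?U ` space N)" by (rule countable_subset)
  fix p assume "p \<in> ?U ` space N"
  then obtain \<omega>0 where p: "p = ?U \<omega>0" by auto
  have "{\<omega>\<in>space N. ?U \<omega> = p} = {\<omega>\<in>space N. \<forall>c\<in>D. tau (fst c) (snd c) \<omega> = tau (fst c) (snd c) \<omega>0 \<and> s (fst c) (snd c) \<omega> = s (fst c) (snd c) \<omega>0}"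
    unfolding p U_def by (auto simp: restrict_def fun_eq_iff)
  also have "\<dots> \<in> sets N" by (rule level_set[where tau=tau and s=s, OF fin meas])
  finally show "{\<omega>\<in>space N. ?U \<omega> = p} \<in> sets N" .
  qed
  then show ?thesis by (simp add: U_def)
qed

theorem lemma19:
  fixes M :: "'a measure"
    and n m :: nat and L \<alpha> :: real
    and f :: "nat \<Rightarrow> nat \<Rightarrow> 'v::euclidean_space \<Rightarrow> real"
    and df :: "nat \<Rightarrow> nat \<Rightarrow> 'v \<Rightarrow> 'v"
    and W :: "nat \<Rightarrow> nat \<Rightarrow> real"
    and x0 :: 'v
    and tau s :: "nat \<Rightarrow> nat \<Rightarrow> 'a \<Rightarrow> nat"
    and F :: "'v \<Rightarrow> real"
    and k :: nat
  assumes n: "n \<ge> 1" and m: "m \<ge> 1" and L: "L > 0"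
    and grad: "\<And>i j x. i \<in> {1..n} \<Longrightarrow> j \<in> {1..m} \<Longrightarrow>
                 (f i j has_derivative (\<lambda>h. df i j x \<bullet> h)) (at x)"
    and smooth: "\<And>i j x y. i \<in> {1..n} \<Longrightarrow> j \<in> {1..m} \<Longrightarrow>
                 norm (df i j x - df i j y) \<le> L * norm (x - y)"
    and F_def: "F = (\<lambda>x. (1 / real n) * (\<Sum>i\<in>{1..n}. (1 / real m) * (\<Sum>j\<in>{1..m}. f i j x)))"
    and F_bdd: "bdd_below (range F)"
    and W_ds: "doubly_stochastic W n" and W_prim: "primitive W n"
    and prob: "prob_space M"
    and tau_rv: "\<And>t i. i \<in> {1..n} \<Longrightarrow> tau t i \<in> measurable M (count_space UNIV)"
    and s_rv: "\<And>t i. i \<in> {1..n} \<Longrightarrow> s t i \<in> measurable M (count_space UNIV)"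
    and tau_unif: "\<And>t i. i \<in> {1..n} \<Longrightarrow>
                 distr M (count_space UNIV) (tau t i) = measure_pmf (pmf_of_set {1..m})"
    and s_unif: "\<And>t i. i \<in> {1..n} \<Longrightarrow>
                 distr M (count_space UNIV) (s t i) = measure_pmf (pmf_of_set {1..m})"
    and indep: "prob_space.indep_vars M (\<lambda>_. count_space UNIV)
                 (\<lambda>c. case c of Inl (t, i) \<Rightarrow> tau t i | Inr (t, i) \<Rightarrow> s t i)
                 ({(t, i). i \<in> {1..n}} <+> {(t, i). i \<in> {1..n}})"
    and \<alpha>_pos: "\<alpha> > 0"
    and \<alpha>_le: "\<alpha> \<le> sqrt (real n) / (sqrt (8 * real m) * L)"
  shows "AE \<omega> in M.
     real_cond_exp M (filt M tau s n k)
       (\<lambda>\<omega>. tval n m (gt_x W df n m \<alpha> x0 (\<lambda>t i. tau t i \<omega>) (\<lambda>t i. s t i \<omega>) (Suc k))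
                       (gt_z W df n m \<alpha> x0 (\<lambda>t i. tau t i \<omega>) (\<lambda>t i. s t i \<omega>) (Suc k))) \<omega>
     \<le> (1 - 1 / (4 * real m)) *
         tval n m (gt_x W df n m \<alpha> x0 (\<lambda>t i. tau t i \<omega>) (\<lambda>t i. s t i \<omega>) k)
                  (gt_z W df n m \<alpha> x0 (\<lambda>t i. tau t i \<omega>) (\<lambda>t i. s t i \<omega>) k)
       + 16 * real m * \<alpha>\<^sup>2 * L *
         (F (avg n (gt_x W df n m \<alpha> x0 (\<lambda>t i. tau t i \<omega>) (\<lambda>t i. s t i \<omega>) k)) - (INF x. F x))
       + (8 * real m * \<alpha>\<^sup>2 * L\<^sup>2 + 9 / (4 * real m)) * (1 / real n) *
         cons_err n (gt_x W df n m \<alpha> x0 (\<lambda>t i. tau t i \<omega>) (\<lambda>t i. s t i \<omega>) k)"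
proof -
  interpret P: prob_space M by (rule prob)
  define Fk where "Fk = filt M tau s n k"
  have subalg: "subalgebra M Fk" unfolding Fk_def by (rule filt_subalg[OF tau_rv s_rv])
  have sfs: "sigma_finite_subalgebra M Fk"
    by (rule finite_measure_subalgebra_is_sigma_finite)
       (simp add: finite_measure_subalgebra_def finite_measure_subalgebra_axioms_def P.finite_measure_axioms subalg)
  interpret S: sigma_finite_subalgebra M Fk by (rule sfs)
  have col: "\<forall>r\<in>{1..n}. (\<Sum>i\<in>{1..n}. W i r) = 1" using W_ds by (simp add: doubly_stochastic_def)
  define st where "st = (\<lambda>j \<omega>. gt_saga W df n m \<alpha> x0 (\<lambda>t i. tau t i \<omega>) (\<lambda>t i. s t i \<omega>) j)"
  define Pn where "Pn = PiE {1..n} (\<lambda>_. {1..m::nat})"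
  define Q where "Q = Pn \<times> Pn"
  define Vn where "Vn = (\<lambda>\<omega>. (restrict (\<lambda>i. tau k i \<omega>) {1..n}, restrict (\<lambda>i. s k i \<omega>) {1..n}))"
  define Psi where "Psi = (\<lambda>sta (q :: (nat \<Rightarrow> nat) \<times> (nat \<Rightarrow> nat)).
      tval n m (fst (stepf W df n m \<alpha> sta (fst q) (snd q))) (snd (snd (snd (stepf W df n m \<alpha> sta (fst q) (snd q))))))"
  define G where "G = (\<lambda>q \<omega>. Psi (st k \<omega>) q)"
  define T where "T = (\<lambda>\<omega>. tval n m (gt_x W df n m \<alpha> x0 (\<lambda>t i. tau t i \<omega>) (\<lambda>t i. s t i \<omega>) (Suc k))
                       (gt_z W df n m \<alpha> x0 (\<lambda>t i. tau t i \<omega>) (\<lambda>t i. s t i \<omega>) (Suc k)))"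
  define dec where "dec = (\<lambda>(u :: (nat \<times> nat \<Rightarrow> nat) \<times> (nat \<times> nat \<Rightarrow> nat)) j.
      gt_saga W df n m \<alpha> x0 (\<lambda>t i. fst u (t, i)) (\<lambda>t i. snd u (t, i)) j)"
  define PD where "PD = {..<k} \<times> {1..n}"
  define Up where "Up = (\<lambda>\<omega>. (restrict (\<lambda>c. tau (fst c) (snd c) \<omega>) PD, restrict (\<lambda>c. s (fst c) (snd c) \<omega>) PD))"
  define PD' where "PD' = {..<Suc k} \<times> {1..n}"
  define Up' where "Up' = (\<lambda>\<omega>. (restrict (\<lambda>c. tau (fst c) (snd c) \<omega>) PD', restrict (\<lambda>c. s (fst c) (snd c) \<omega>) PD'))"
  have finPn: "finite Pn" unfolding Pn_def by (simp add: finite_PiE)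
  have finQ: "finite Q" unfolding Q_def using finPn by simp
  have Pnne: "Pn \<noteq> {}" unfolding Pn_def using m by (simp add: PiE_eq_empty_iff)
  have Qne: "Q \<noteq> {}" unfolding Q_def using Pnne by simp
  have finPD: "finite PD" and finPD': "finite PD'" unfolding PD_def PD'_def by auto
  have stdec: "releq n (st k \<omega>) (dec (Up \<omega>) k)" for \<omega>
    unfolding st_def dec_def Up_def by (rule saga_cong) (auto simp: PD_def)
  have stdec': "releq n (st (Suc k) \<omega>) (dec (Up' \<omega>) (Suc k))" for \<omega>
    unfolding st_def dec_def Up'_def by (rule saga_cong) (auto simp: PD'_def)
  have Gdec: "G q \<omega> = Psi (dec (Up \<omega>) k) q" for q \<omega>
    unfolding G_def Psi_def using releq_vals(2)[OF step_cong[OF stdec[of \<omega>]]] by auto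
  have Tdec: "T \<omega> = tval n m (fst (dec (Up' \<omega>) (Suc k))) (snd (snd (snd (dec (Up' \<omega>) (Suc k)))))" for \<omega>
    unfolding T_def gt_x_def gt_z_def using releq_vals(2)[OF stdec'[of \<omega>]] by (simp add: st_def)
  have TG: "T \<omega> = G (Vn \<omega>) \<omega>" for \<omega>
  proof -
    have "T \<omega> = tval n m (fst (stepf W df n m \<alpha> (st k \<omega>) (\<lambda>i. tau k i \<omega>) (\<lambda>i. s k i \<omega>)))
                 (snd (snd (snd (stepf W df n m \<alpha> (st k \<omega>) (\<lambda>i. tau k i \<omega>) (\<lambda>i. s k i \<omega>)))))"
      unfolding T_def gt_x_def gt_z_def st_def gt_saga_Suc' by simp
    also have "\<dots> = G (Vn \<omega>) \<omega>"
    proof -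
      have "releq n (stepf W df n m \<alpha> (st k \<omega>) (\<lambda>i. tau k i \<omega>) (\<lambda>i. s k i \<omega>))
          (stepf W df n m \<alpha> (st k \<omega>) (restrict (\<lambda>i. tau k i \<omega>) {1..n}) (restrict (\<lambda>i. s k i \<omega>) {1..n}))"
        by (rule step_cong[OF releq_refl]) auto
      from releq_vals(2)[OF this] show ?thesis unfolding G_def Psi_def Vn_def by simp
    qed
    finally show ?thesis .
  qed
  have measF: "tau (fst c) (snd c) \<in> measurable Fk (count_space UNIV) \<and> s (fst c) (snd c) \<in> measurable Fk (count_space UNIV)"
    if "c \<in> PD" for c using that unfolding PD_def Fk_def by (auto intro: filt_meas)
  have measM: "tau (fst c) (snd c) \<in> measurable M (count_space UNIV) \<and> s (fst c) (snd c) \<in> measurable M (count_space UNIV)"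
    if "c \<in> PD'" for c using that unfolding PD'_def by (auto intro: tau_rv s_rv)
  have Gm: "G q \<in> borel_measurable Fk" for q
    unfolding Gdec[abs_def] Up_def by (rule restr_meas[where tau=tau and s=s, OF finPD measF])
  have Tm: "T \<in> borel_measurable M"
    unfolding Tdec[abs_def] Up'_def by (rule restr_meas[where tau=tau and s=s, OF finPD' measM])
  have AEr: "AE \<omega> in M. \<forall>c\<in>PD'. tau (fst c) (snd c) \<omega> \<in> {1..m} \<and> s (fst c) (snd c) \<omega> \<in> {1..m}"
  proof (rule AE_finite_allI[OF finPD'])
    fix c assume c: "c \<in> PD'"
    then have i: "snd c \<in> {1..n}" unfolding PD'_def by auto
    show "AE \<omega> in M. tau (fst c) (snd c) \<omega> \<in> {1..m} \<and> s (fst c) (snd c) \<omega> \<in> {1..m}"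
      using unif_AE[OF tau_rv[OF i] tau_unif[OF i] m] unif_AE[OF s_rv[OF i] s_unif[OF i] m]
      by eventually_elim auto
  qed
  define SU where "SU = PiE PD (\<lambda>_. {1..m::nat}) \<times> PiE PD (\<lambda>_. {1..m::nat})"
  have finSU: "finite SU" unfolding SU_def using finPD by (simp add: finite_PiE)
  have AEU: "AE \<omega> in M. Up \<omega> \<in> SU"
    using AEr by eventually_elim (auto simp: SU_def Up_def PD_def PD'_def)
  have AEQ: "AE \<omega> in M. Vn \<omega> \<in> Q"
    using AEr by eventually_elim (auto simp: Q_def Pn_def Vn_def PD'_def)
  define C where "C = (\<Sum>u\<in>SU. \<Sum>q\<in>Q. \<bar>Psi (dec u k) q\<bar>)"
  have Gb: "AE \<omega> in M. \<bar>G q \<omega>\<bar> \<le> C" if q: "q \<in> Q" for q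
    using AEU
  proof eventually_elim
    case (elim \<omega>)
    have "\<bar>G q \<omega>\<bar> = \<bar>Psi (dec (Up \<omega>) k) q\<bar>" by (simp add: Gdec)
    also have "\<dots> \<le> (\<Sum>q'\<in>Q. \<bar>Psi (dec (Up \<omega>) k) q'\<bar>)"
      by (rule member_le_sum[OF q _ finQ]) auto
    also have "\<dots> \<le> C" unfolding C_def
      by (rule member_le_sum[OF elim _ finSU, where f="\<lambda>u. \<Sum>q'\<in>Q. \<bar>Psi (dec u k) q'\<bar>"]) (auto intro: sum_nonneg)
    finally show ?case .
  qed
  have Bm: "{\<omega>\<in>space M. Vn \<omega> = q} \<in> sets M" if q: "q \<in> Q" for q
  proof -
    obtain a b where ab: "q = (a, b)" "a \<in> Pn" "b \<in> Pn" using q unfolding Q_def by auto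
    have "{\<omega>\<in>space M. Vn \<omega> = q} = {\<omega>\<in>space M. \<forall>c\<in>{k} \<times> {1..n}. tau (fst c) (snd c) \<omega> = a (snd c) \<and> s (fst c) (snd c) \<omega> = b (snd c)}"
      using ab unfolding Vn_def Pn_def by (auto simp: fun_eq_iff PiE_def extensional_def restrict_def)
    also have "\<dots> \<in> sets M"
      by (rule level_set[where tau=tau and s=s]) (auto intro: tau_rv s_rv)
    finally show ?thesis .
  qed
  have ind: "measure M (A \<inter> {\<omega>\<in>space M. Vn \<omega> = q}) = measure M A * (1 / real (card Q))"
    if A: "A \<in> sets Fk" and q: "q \<in> Q" for A q
  proof -
    obtain a b where ab: "q = (a, b)" "a \<in> Pn" "b \<in> Pn" using q unfolding Q_def by auto
    show ?thesis unfolding Vn_def ab(1) Q_def Pn_def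
      by (rule indep_part[OF prob n m tau_rv s_rv tau_unif s_unif indep A[unfolded Fk_def]]) (use ab in \<open>auto simp: Pn_def\<close>)
  qed
  have CE: "AE \<omega> in M. real_cond_exp M Fk T \<omega> = (\<Sum>q\<in>Q. G q \<omega>) / real (card Q)"
    by (rule S.condexp_discrete[OF prob finQ Qne Bm AEQ ind Gm Gb Tm TG])
  have det: "(\<Sum>q\<in>Q. G q \<omega>) / real (card Q)
     \<le> (1 - 1 / (4 * real m)) *
         tval n m (gt_x W df n m \<alpha> x0 (\<lambda>t i. tau t i \<omega>) (\<lambda>t i. s t i \<omega>) k)
                  (gt_z W df n m \<alpha> x0 (\<lambda>t i. tau t i \<omega>) (\<lambda>t i. s t i \<omega>) k)
       + 16 * real m * \<alpha>\<^sup>2 * L *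
         (F (avg n (gt_x W df n m \<alpha> x0 (\<lambda>t i. tau t i \<omega>) (\<lambda>t i. s t i \<omega>) k)) - (INF x. F x))
       + (8 * real m * \<alpha>\<^sup>2 * L\<^sup>2 + 9 / (4 * real m)) * (1 / real n) *
         cons_err n (gt_x W df n m \<alpha> x0 (\<lambda>t i. tau t i \<omega>) (\<lambda>t i. s t i \<omega>) k)" for \<omega>
  proof -
    obtain x y gp z where stk: "st k \<omega> = (x, y, gp, z)" by (cases "st k \<omega>") auto
    have inv: "avg n y = avg n gp" using saga_inv[OF col, of df m \<alpha> x0 "\<lambda>t i. tau t i \<omega>" "\<lambda>t i. s t i \<omega>" k] stk
      by (simp add: st_def)
    have gx: "gt_x W df n m \<alpha> x0 (\<lambda>t i. tau t i \<omega>) (\<lambda>t i. s t i \<omega>) k = x"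
      and gz: "gt_z W df n m \<alpha> x0 (\<lambda>t i. tau t i \<omega>) (\<lambda>t i. s t i \<omega>) k = z"
      using stk by (simp_all add: gt_x_def gt_z_def st_def)
    show ?thesis unfolding gx gz G_def stk Psi_def Q_def Pn_def
      by (rule det_step[OF n m L grad smooth F_def F_bdd \<alpha>_pos \<alpha>_le col inv])
  qed
  show ?thesis
    using CE unfolding Fk_def T_def
  proof eventually_elim
    case (elim \<omega>)
    then show ?case using det[of \<omega>] by simp
  qed
qed

end
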